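(* The permutation defect fusion product $\otimes$ on $C^\times_{S_n}$ (given by the product of $C^{\boxtimes n}$ on anyons, anyon–defect fusion on mixed products, and defect fusion on pairs of defects, extended bilinearly) is associative, making $(C^\times_{S_n},\otimes)$ into a ring.
   Context: Let $\mathcal{C}$ be a modular tensor category, $\mathrm{Irr}(\mathcal{C})$ its finite set of isomorphism classes of simple objects (containing $1$), $a\mapsto a^*$ duality, $C$ its fusion ring (free $\mathbb{Z}$-module on $\mathrm{Irr}(\mathcal{C})$, product $a\otimes b=\sum_cN_{ab}^cc$). Fix $n\ge2$. $C^{\boxtimes n}=C^{\otimes_{\mathbb{Z}}n}$ has basis the multilayer anyons $\vec a=a_1\boxtimes\cdots\boxtimes a_n$, layerwise product, unit $\vec1$; $S_n$ acts by permuting layers ($\rho$ moves layer $i$ to $\rho(i)$); permutations compose right to left. For $\sigma\in S_n$ with orbits $\mathcal{O}(\sigma)$ (cycles incl. fixed points), $\vec a$ is $\sigma$-fixed iff constant on orbits. $C_\sigma$: free $\mathbb{Z}$-module on symbols $X^\sigma_{\vec a}$ ($\vec a$ $\sigma$-fixed), identified with $R_\sigma=\bigotimes_{O\in\mathcal{O}(\sigma)}C$ via $X^\sigma_{\vec a}\leftrightarrow\bigotimes_Oa_O$; $X^\sigma_r$ for $r\in R_\sigma$. $C_{\mathrm{id}}=C^{\boxtimes n}$ ($X^{\mathrm{id}}_{\vec a}=\vec a$), $C^\times_{S_n}=\bigoplus_\sigma C_\sigma$. Confinement $c_\sigma:C^{\boxtimes n}\to R_\sigma$, linear, $c_\sigma(\vec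 a)=\bigotimes_O(\bigotimes_{k\in O}a_k)$. Anyon–defect fusion $\vec a\otimes X^\sigma_{\vec b}=X^\sigma_{\vec b}\otimes\vec a:=X^\sigma_{c_\sigma(\vec a)\cdot\vec b}$. A $\sigma$-deconfinement $d_\sigma(\vec b)$: any $d\in C^{\boxtimes n}$ with nonnegative coefficients and $d\otimes X^\sigma_{\vec1}=X^\sigma_{\vec b}$. For $t=(ij)$, $\Omega_t=\sum_{c}\vec e_c$ ($c$ in layer $i$, $c^*$ in layer $j$, $1$ elsewhere). Following the paper's algorithm, $F(\rho,\sigma)\in C^{\boxtimes n}$: write $\rho=t_1\cdots t_m$ with each disjoint cycle $(i_1\cdots i_l)$ written as $(i_1i_2)(i_2i_3)\cdots(i_{l-1}i_l)$; $\pi_{m+1}=\sigma$, $\pi_k=t_k\pi_{k+1}$; $F=\prod\Omega_{t_k}$ over $k$ with both indices of $t_k$ in a common cycle of $\pi_{k+1}$. Defect fusion: $X^\rho_{\vec a}\otimes X^\sigma_{\vec b}:=(d_\rho(\vec a)\otimes d_\sigma(\vec b)\otimes F(\rho,\sigma))\otimes X^{\rho\sigma}_{\vec1}$. *)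

theory Defs
  imports Complex_Main "HOL-Combinatorics.Cycles" "HOL-Combinatorics.Permutations"
begin

text \<open>Simple objects: a finite type 'a; unit object one; duality dual;
  fusion multiplicities N a b c = N_{ab}^c.\<close>

definition mtc_fusion_rules ::
  "('a::finite \<Rightarrow> 'a \<Rightarrow> 'a \<Rightarrow> nat) \<Rightarrow> 'a \<Rightarrow> ('a \<Rightarrow> 'a) \<Rightarrow> bool" where
  "mtc_fusion_rules N one dual \<longleftrightarrow>
     (\<forall>a. dual (dual a) = a) \<and> dual one = one \<and>
     (\<forall>a b. N one a b = (if a = b then 1 else 0)) \<and>
     (\<forall>a b. N a one b = (if a = b then 1 else 0)) \<and>
     (\<forall>a b c. N a b c = N b a c) \<and>
     (\<forall>a b c d. (\<Sum>e\<in>UNIV. N a b e * N e c d) = (\<Sum>e\<in>UNIV. N b c e * N a e d)) \<and>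
     (\<forall>a b. N a b one = (if b = dual a then 1 else 0)) \<and>
     (\<forall>a b c. N a b c = N (dual a) c b) \<and>
     (\<forall>a b c. N a b c = N (dual a) (dual b) (dual c)) \<and>
     (\<exists>S :: 'a \<Rightarrow> 'a \<Rightarrow> complex.
        (\<forall>a b. S a b = S b a) \<and>
        (\<forall>a b. (\<Sum>x\<in>UNIV. S a x * cnj (S b x)) = (if a = b then 1 else 0)) \<and>
        (\<forall>a b. S (dual a) b = cnj (S a b)) \<and>
        (\<forall>x. S one x \<noteq> 0) \<and>
        (\<forall>a b c. of_nat (N a b c) = (\<Sum>x\<in>UNIV. S a x * S b x * cnj (S c x) / S one x)))"

section \<open>The fusion ring C (elements: 'a \<Rightarrow> int)\<close>

definition delta :: "'b \<Rightarrow> 'b \<Rightarrow> int" where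
  "delta a = (\<lambda>c. if c = a then 1 else 0)"

definition fmul :: "('a::finite \<Rightarrow> 'a \<Rightarrow> 'a \<Rightarrow> nat) \<Rightarrow> ('a \<Rightarrow> int) \<Rightarrow> ('a \<Rightarrow> int) \<Rightarrow> 'a \<Rightarrow> int" where
  "fmul N x y = (\<lambda>c. \<Sum>a\<in>UNIV. \<Sum>b\<in>UNIV. x a * y b * int (N a b c))"

definition fprod_list :: "('a::finite \<Rightarrow> 'a \<Rightarrow> 'a \<Rightarrow> nat) \<Rightarrow> 'a \<Rightarrow> 'a list \<Rightarrow> 'a \<Rightarrow> int" where
  "fprod_list N one xs = foldr (\<lambda>a r. fmul N (delta a) r) xs (delta one)"

text \<open>Layers: a finite type 'n with CARD('n) = n.  Permutations: functions
  \<sigma> with \<sigma> permutes UNIV; composition is right to left (\<rho>\<sigma> = \<rho> \<circ> \<sigma>).\<close>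

definition perms :: "('n \<Rightarrow> 'n) set" where
  "perms = {p. p permutes UNIV}"

definition porb :: "('n \<Rightarrow> 'n) \<Rightarrow> 'n \<Rightarrow> 'n set" where
  "porb \<sigma> k = {(\<sigma> ^^ j) k | j. True}"

definition orbs :: "('n \<Rightarrow> 'n) \<Rightarrow> 'n set set" where
  "orbs \<sigma> = range (porb \<sigma>)"

definition olist :: "'n set \<Rightarrow> 'n list" where
  "olist Ob = (SOME xs. distinct xs \<and> set xs = Ob)"

definition orep :: "'n set \<Rightarrow> 'n" where
  "orep Ob = (SOME k. k \<in> Ob)"

definition sameorb :: "('n \<Rightarrow> 'n) \<Rightarrow> 'n \<Rightarrow> 'n \<Rightarrow> bool" where
  "sameorb \<pi> i j \<longleftrightarrow> (\<exists>m. (\<pi> ^^ m) i = j)"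

definition sfixed :: "('n \<Rightarrow> 'n) \<Rightarrow> ('n \<Rightarrow> 'a) \<Rightarrow> bool" where
  "sfixed \<sigma> b \<longleftrightarrow> (\<forall>k. b (\<sigma> k) = b k)"

section \<open>Multilayer anyons C^{\<boxtimes>n}: elements ('n \<Rightarrow> 'a) \<Rightarrow> int\<close>

definition avec :: "'a \<Rightarrow> 'n \<Rightarrow> 'a" where
  "avec one = (\<lambda>_. one)"

definition amul :: "('a::finite \<Rightarrow> 'a \<Rightarrow> 'a \<Rightarrow> nat) \<Rightarrow> (('n::finite \<Rightarrow> 'a) \<Rightarrow> int)
    \<Rightarrow> (('n \<Rightarrow> 'a) \<Rightarrow> int) \<Rightarrow> ('n \<Rightarrow> 'a) \<Rightarrow> int" where
  "amul N x y = (\<lambda>v. \<Sum>u\<in>UNIV. \<Sum>w\<in>UNIV. x u * y w * (\<Prod>i\<in>UNIV. int (N (u i) (w i) (v i))))"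

text \<open>Elements of R_\<sigma> = \<Otimes>_{Ob} C are represented as functions on \<sigma>-fixed
  labels (X^\<sigma>_b \<leftrightarrow> \<Otimes>_O b_O), zero on non-fixed labels.\<close>

definition rmul :: "('a::finite \<Rightarrow> 'a \<Rightarrow> 'a \<Rightarrow> nat) \<Rightarrow> ('n::finite \<Rightarrow> 'n)
    \<Rightarrow> (('n \<Rightarrow> 'a) \<Rightarrow> int) \<Rightarrow> (('n \<Rightarrow> 'a) \<Rightarrow> int) \<Rightarrow> ('n \<Rightarrow> 'a) \<Rightarrow> int" where
  "rmul N \<sigma> r s = (\<lambda>b. if sfixed \<sigma> b then
      (\<Sum>u\<in>{u. sfixed \<sigma> u}. \<Sum>w\<in>{w. sfixed \<sigma> w}. r u * s w *
         (\<Prod>Ob\<in>orbs \<sigma>. int (N (u (orep Ob)) (w (orep Ob)) (b (orep Ob)))))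
     else 0)"

definition conf :: "('a::finite \<Rightarrow> 'a \<Rightarrow> 'a \<Rightarrow> nat) \<Rightarrow> 'a \<Rightarrow> ('n::finite \<Rightarrow> 'n)
    \<Rightarrow> (('n \<Rightarrow> 'a) \<Rightarrow> int) \<Rightarrow> ('n \<Rightarrow> 'a) \<Rightarrow> int" where
  "conf N one \<sigma> x = (\<lambda>b. if sfixed \<sigma> b then
      (\<Sum>u\<in>UNIV. x u * (\<Prod>Ob\<in>orbs \<sigma>. fprod_list N one (map u (olist Ob)) (b (orep Ob))))
     else 0)"

text \<open>\<Omega>_{(ij)} = \<Sum>_c (c in layer i, c^* in layer j, 1 elsewhere).\<close>
definition Omega :: "('a \<Rightarrow> 'a) \<Rightarrow> 'a \<Rightarrow> 'n \<Rightarrow> 'n \<Rightarrow> ('n \<Rightarrow> 'a) \<Rightarrow> int" where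
  "Omega dual one i j = (\<lambda>v. if v j = dual (v i) \<and> (\<forall>k. k \<noteq> i \<and> k \<noteq> j \<longrightarrow> v k = one) then 1 else 0)"

text \<open>A cycle decomposition of \<rho>: disjoint cycles (i_1 ... i_l), l \<ge> 2, with
  \<rho> their product; the cycle (i_1 ... i_l) is cycle_of_list [i_1,...,i_l]
  = (i_1 i_2)(i_2 i_3)...(i_{l-1} i_l).\<close>
definition is_cycle_decomp :: "('n \<Rightarrow> 'n) \<Rightarrow> 'n list list \<Rightarrow> bool" where
  "is_cycle_decomp \<rho> cs \<longleftrightarrow>
     (\<forall>c\<in>set cs. 2 \<le> length c) \<and> distinct (concat cs) \<and>
     \<rho> = foldr (\<lambda>c p. cycle_of_list c \<circ> p) cs id"

definition transp_list :: "'n list list \<Rightarrow> ('n \<times> 'n) list" where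
  "transp_list cs = concat (map (\<lambda>c. zip c (tl c)) cs)"

text \<open>For the word ts = t_k ... t_m: \<pi>_{k+1} = t_{k+1} ... t_m \<sigma>, and factor
  \<Omega>_{t_k} is included iff both indices of t_k lie in a common cycle of \<pi>_{k+1}.\<close>
fun Fword :: "('a::finite \<Rightarrow> 'a \<Rightarrow> 'a \<Rightarrow> nat) \<Rightarrow> ('a \<Rightarrow> 'a) \<Rightarrow> 'a
    \<Rightarrow> ('n::finite \<times> 'n) list \<Rightarrow> ('n \<Rightarrow> 'n) \<Rightarrow> ('n \<Rightarrow> 'a) \<Rightarrow> int" where
  "Fword N dual one [] \<sigma> = delta (avec one)"
| "Fword N dual one ((i, j) # ts) \<sigma> =
     (let \<pi> = foldr (\<lambda>(i', j') p. transpose i' j' \<circ> p) ts \<sigma>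
      in amul N (if sameorb \<pi> i j then Omega dual one i j else delta (avec one))
                (Fword N dual one ts \<sigma>))"

text \<open>Elements: x \<sigma> b = coefficient of X^\<sigma>_b; valid elements are supported on
  pairs (\<sigma>, b) with \<sigma> a permutation and b \<sigma>-fixed.\<close>
definition valid_elem :: "(('n \<Rightarrow> 'n) \<Rightarrow> ('n \<Rightarrow> 'a) \<Rightarrow> int) \<Rightarrow> bool" where
  "valid_elem x \<longleftrightarrow> (\<forall>\<sigma> b. x \<sigma> b \<noteq> 0 \<longrightarrow> \<sigma> permutes UNIV \<and> sfixed \<sigma> b)"

definition Xb :: "('n \<Rightarrow> 'n) \<Rightarrow> ('n \<Rightarrow> 'a) \<Rightarrow> ('n \<Rightarrow> 'n) \<Rightarrow> ('n \<Rightarrow> 'a) \<Rightarrow> int" where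
  "Xb \<sigma> b = (\<lambda>\<tau> v. if \<tau> = \<sigma> \<and> v = b then 1 else 0)"

definition Xr :: "('n \<Rightarrow> 'n) \<Rightarrow> (('n \<Rightarrow> 'a) \<Rightarrow> int) \<Rightarrow> ('n \<Rightarrow> 'n) \<Rightarrow> ('n \<Rightarrow> 'a) \<Rightarrow> int" where
  "Xr \<sigma> r = (\<lambda>\<tau> v. if \<tau> = \<sigma> then r v else 0)"

definition is_deconf :: "('a::finite \<Rightarrow> 'a \<Rightarrow> 'a \<Rightarrow> nat) \<Rightarrow> 'a
    \<Rightarrow> (('n::finite \<Rightarrow> 'n) \<Rightarrow> ('n \<Rightarrow> 'a) \<Rightarrow> ('n \<Rightarrow> 'a) \<Rightarrow> int) \<Rightarrow> bool" where
  "is_deconf N one D \<longleftrightarrow> (\<forall>\<sigma> b. \<sigma> permutes UNIV \<and> sfixed \<sigma> b \<longrightarrow>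
      (\<forall>v. 0 \<le> D \<sigma> b v) \<and> rmul N \<sigma> (conf N one \<sigma> (D \<sigma> b)) (delta (avec one)) = delta b)"

definition bprod :: "('a::finite \<Rightarrow> 'a \<Rightarrow> 'a \<Rightarrow> nat) \<Rightarrow> ('a \<Rightarrow> 'a) \<Rightarrow> 'a
    \<Rightarrow> (('n::finite \<Rightarrow> 'n) \<Rightarrow> ('n \<Rightarrow> 'a) \<Rightarrow> ('n \<Rightarrow> 'a) \<Rightarrow> int) \<Rightarrow> (('n \<Rightarrow> 'n) \<Rightarrow> 'n list list)
    \<Rightarrow> ('n \<Rightarrow> 'n) \<Rightarrow> ('n \<Rightarrow> 'a) \<Rightarrow> ('n \<Rightarrow> 'n) \<Rightarrow> ('n \<Rightarrow> 'a)
    \<Rightarrow> ('n \<Rightarrow> 'n) \<Rightarrow> ('n \<Rightarrow> 'a) \<Rightarrow> int" where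
  "bprod N dual one D dec \<rho> a \<sigma> b =
    (if \<rho> = id \<and> \<sigma> = id then Xr id (amul N (delta a) (delta b))
     else if \<rho> = id then Xr \<sigma> (rmul N \<sigma> (conf N one \<sigma> (delta a)) (delta b))
     else if \<sigma> = id then Xr \<rho> (rmul N \<rho> (conf N one \<rho> (delta b)) (delta a))
     else Xr (\<rho> \<circ> \<sigma>) (rmul N (\<rho> \<circ> \<sigma>)
            (conf N one (\<rho> \<circ> \<sigma>)
               (amul N (amul N (D \<rho> a) (D \<sigma> b)) (Fword N dual one (transp_list (dec \<rho>)) \<sigma>)))
            (delta (avec one))))"

definition dmul :: "('a::finite \<Rightarrow> 'a \<Rightarrow> 'a \<Rightarrow> nat) \<Rightarrow> ('a \<Rightarrow> 'a) \<Rightarrow> 'a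
    \<Rightarrow> (('n::finite \<Rightarrow> 'n) \<Rightarrow> ('n \<Rightarrow> 'a) \<Rightarrow> ('n \<Rightarrow> 'a) \<Rightarrow> int) \<Rightarrow> (('n \<Rightarrow> 'n) \<Rightarrow> 'n list list)
    \<Rightarrow> (('n \<Rightarrow> 'n) \<Rightarrow> ('n \<Rightarrow> 'a) \<Rightarrow> int) \<Rightarrow> (('n \<Rightarrow> 'n) \<Rightarrow> ('n \<Rightarrow> 'a) \<Rightarrow> int)
    \<Rightarrow> ('n \<Rightarrow> 'n) \<Rightarrow> ('n \<Rightarrow> 'a) \<Rightarrow> int" where
  "dmul N dual one D dec x y = (\<lambda>\<tau> v.
     \<Sum>\<rho>\<in>perms. \<Sum>a\<in>{a. sfixed \<rho> a}. \<Sum>\<sigma>\<in>perms. \<Sum>b\<in>{b. sfixed \<sigma> b}.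
        x \<rho> a * y \<sigma> b * bprod N dual one D dec \<rho> a \<sigma> b \<tau> v)"

end

theory Submission
  imports Defs "HOL-Library.FuncSet"
begin

lemma perm_fin: "(\<pi>::'n::finite\<Rightarrow>'n) permutes UNIV \<Longrightarrow> permutation \<pi>"
  unfolding permutation_permutes using finite_UNIV by blast

lemma porb_self: "k \<in> porb \<pi> k"
  unfolding porb_def by (auto intro: exI[of _ 0])

lemma porb_step: "x \<in> porb \<pi> k \<Longrightarrow> \<pi> x \<in> porb \<pi> k"
  unfolding porb_def by clarsimp (metis comp_apply funpow.simps(2))

lemma porb_funpow: "x \<in> porb \<pi> k \<Longrightarrow> (\<pi>^^m) x \<in> porb \<pi> k"
  by (induction m) (auto intro: porb_step)

lemma porb_min:
  assumes "\<And>x. x \<in> S \<Longrightarrow> \<pi> x \<in> S" "k \<in> S"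
  shows "porb \<pi> k \<subseteq> S"
proof
  fix x assume "x \<in> porb \<pi> k"
  then obtain m where "x = (\<pi>^^m) k" unfolding porb_def by auto
  moreover have "(\<pi>^^m) k \<in> S" for m by (induction m) (use assms in auto)
  ultimately show "x \<in> S" by simp
qed

lemma porb_sub: "x \<in> porb \<pi> k \<Longrightarrow> porb \<pi> x \<subseteq> porb \<pi> k"
  by (rule porb_min) (auto intro: porb_step)

lemma porb_back:
  assumes "(\<pi>::'n::finite\<Rightarrow>'n) permutes UNIV" "x \<in> porb \<pi> k"
  shows "k \<in> porb \<pi> x"
proof -
  obtain r where r: "\<pi>^^r = id" "r > 0"
    using permutation_is_nilpotent[OF perm_fin[OF assms(1)]] by blast
  obtain m where m: "x = (\<pi>^^m) k" using assms(2) unfolding porb_def by auto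
  have "\<pi>^^(r*m) = id" by (simp add: funpow_mult[symmetric] r(1))
  moreover have "r*m \<ge> m" using r(2) by simp
  ultimately have "(\<pi>^^(r*m - m)) x = k"
  proof -
    have "(\<pi>^^(r*m - m)) ((\<pi>^^m) k) = (\<pi>^^(r*m - m + m)) k"
      by (simp only: funpow_add comp_apply)
    also have "r*m - m + m = r*m" using \<open>r*m \<ge> m\<close> by simp
    finally show ?thesis using m \<open>\<pi>^^(r*m) = id\<close> by simp
  qed
  then have "\<exists>j. k = (\<pi>^^j) x \<and> True" by metis
  then show ?thesis unfolding porb_def by (simp only: mem_Collect_eq)
qed

lemma porb_eq:
  assumes "(\<pi>::'n::finite\<Rightarrow>'n) permutes UNIV" "x \<in> porb \<pi> k"
  shows "porb \<pi> x = porb \<pi> k"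
  using porb_sub[OF assms(2)] porb_sub[OF porb_back[OF assms]] by blast

lemma porb_disj:
  assumes "(\<pi>::'n::finite\<Rightarrow>'n) permutes UNIV" "porb \<pi> x \<noteq> porb \<pi> k"
  shows "porb \<pi> x \<inter> porb \<pi> k = {}"
proof (rule ccontr)
  assume "porb \<pi> x \<inter> porb \<pi> k \<noteq> {}"
  then obtain z where z: "z \<in> porb \<pi> x" "z \<in> porb \<pi> k" by blast
  have "porb \<pi> z = porb \<pi> x" "porb \<pi> z = porb \<pi> k"
    by (rule porb_eq[OF assms(1) z(1)], rule porb_eq[OF assms(1) z(2)])
  then show False using assms(2) by simp
qed

lemma orep_in: "O' \<noteq> {} \<Longrightarrow> orep O' \<in> O'"
proof -
  assume "O' \<noteq> {}"
  then obtain k where "k \<in> O'" by (meson ex_in_conv)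
  then show ?thesis unfolding orep_def by (rule someI)
qed

lemma orep_porb: "orep (porb \<pi> k) \<in> porb \<pi> k"
proof (rule orep_in)
  show "porb \<pi> k \<noteq> {}" using porb_self[of k \<pi>] by (metis empty_iff)
qed

lemma porb_orep:
  assumes "(\<pi>::'n::finite\<Rightarrow>'n) permutes UNIV" "O' \<in> orbs \<pi>"
  shows "porb \<pi> (orep O') = O'"
proof -
  obtain k where k: "O' = porb \<pi> k" using assms(2) unfolding orbs_def by auto
  show ?thesis unfolding k by (rule porb_eq[OF assms(1) orep_porb])
qed

lemma orep_orbs: "O' \<in> orbs \<pi> \<Longrightarrow> orep O' \<in> O'"
  unfolding orbs_def by (auto simp: orep_porb)

lemma sfixed_iff: "sfixed \<pi> y \<longleftrightarrow> y \<circ> \<pi> = y"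
  unfolding sfixed_def by (auto simp: fun_eq_iff)

lemma sfixed_porb: "sfixed \<pi> y \<Longrightarrow> x \<in> porb \<pi> k \<Longrightarrow> y x = y k"
proof -
  assume s: "sfixed \<pi> y" and "x \<in> porb \<pi> k"
  then obtain m where "x = (\<pi>^^m) k" unfolding porb_def by auto
  moreover have "y ((\<pi>^^m) k) = y k" for m by (induction m) (use s in \<open>auto simp: sfixed_def\<close>)
  ultimately show ?thesis by simp
qed

lemma sfixed_orep: "sfixed \<pi> y \<Longrightarrow> O' \<in> orbs \<pi> \<Longrightarrow> x \<in> O' \<Longrightarrow> y x = y (orep O')"
proof -
  assume a: "sfixed \<pi> y" "O' \<in> orbs \<pi>" "x \<in> O'"
  then obtain k where k: "O' = porb \<pi> k" unfolding orbs_def by auto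
  show ?thesis using sfixed_porb[OF a(1), of x k] sfixed_porb[OF a(1) orep_porb[of \<pi> k]] a(3) k by simp
qed

lemma sfixed_eq_orbs:
  assumes "(\<pi>::'n::finite\<Rightarrow>'n) permutes UNIV" "sfixed \<pi> b" "sfixed \<pi> b'"
  shows "b = b' \<longleftrightarrow> (\<forall>O'\<in>orbs \<pi>. b (orep O') = b' (orep O'))"
proof
  assume h: "\<forall>O'\<in>orbs \<pi>. b (orep O') = b' (orep O')"
  show "b = b'"
  proof
    fix k
    have O: "porb \<pi> k \<in> orbs \<pi>" unfolding orbs_def by (rule rangeI)
    show "b k = b' k"
      using h[rule_format, OF O] sfixed_orep[OF assms(2) O porb_self] sfixed_orep[OF assms(3) O porb_self]
      by simp
  qed
qed simp

lemma sum_sfixed_prod: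
  fixes g :: "'n::finite set \<Rightarrow> 'a::finite \<Rightarrow> 'c::comm_semiring_1"
  assumes "(\<pi>::'n\<Rightarrow>'n) permutes UNIV"
  shows "(\<Sum>b\<in>{b::'n\<Rightarrow>'a. sfixed \<pi> b}. \<Prod>O'\<in>orbs \<pi>. g O' (b (orep O')))
       = (\<Prod>O'\<in>orbs \<pi>. \<Sum>c\<in>UNIV. g O' c)"
proof -
  have "(\<Prod>O'\<in>orbs \<pi>. \<Sum>c\<in>UNIV. g O' c) = (\<Sum>f\<in>PiE (orbs \<pi>) (\<lambda>_. UNIV). \<Prod>O'\<in>orbs \<pi>. g O' (f O'))"
    by (rule prod_sum_PiE) auto
  also have "\<dots> = (\<Sum>b\<in>{b::'n\<Rightarrow>'a. sfixed \<pi> b}. \<Prod>O'\<in>orbs \<pi>. g O' (b (orep O')))"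
  proof (rule sum.reindex_bij_witness[of _ "\<lambda>b. restrict (\<lambda>O'. b (orep O')) (orbs \<pi>)" "\<lambda>f k. f (porb \<pi> k)"])
    fix f :: "'n set \<Rightarrow> 'a" assume f: "f \<in> PiE (orbs \<pi>) (\<lambda>_. UNIV)"
    show "restrict (\<lambda>O'. f (porb \<pi> (orep O'))) (orbs \<pi>) = f"
    proof
      fix O' show "restrict (\<lambda>O'. f (porb \<pi> (orep O'))) (orbs \<pi>) O' = f O'"
      proof (cases "O' \<in> orbs \<pi>")
        case True then show ?thesis by (simp add: porb_orep[OF assms])
      next
        case False then show ?thesis using PiE_arb[OF f False] by simp
      qed
    qed
  next
    fix f :: "'n set \<Rightarrow> 'a" assume f: "f \<in> PiE (orbs \<pi>) (\<lambda>_. UNIV)"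
    show "(\<lambda>k. f (porb \<pi> k)) \<in> {b. sfixed \<pi> b}"
      unfolding sfixed_def using porb_eq[OF assms porb_step[OF porb_self]] by simp
  next
    fix b :: "'n \<Rightarrow> 'a" assume b: "b \<in> {b. sfixed \<pi> b}"
    show "(\<lambda>k. restrict (\<lambda>O'. b (orep O')) (orbs \<pi>) (porb \<pi> k)) = b"
    proof
      fix k
      have O: "porb \<pi> k \<in> orbs \<pi>" unfolding orbs_def by (rule rangeI)
      have sb: "sfixed \<pi> b" using b by simp
      have "b k = b (orep (porb \<pi> k))" by (rule sfixed_orep[OF sb O porb_self])
      then show "restrict (\<lambda>O'. b (orep O')) (orbs \<pi>) (porb \<pi> k) = b k"
        using O by simp
    qed
  next
    fix b :: "'n \<Rightarrow> 'a" assume b: "b \<in> {b. sfixed \<pi> b}"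
    show "restrict (\<lambda>O'. b (orep O')) (orbs \<pi>) \<in> PiE (orbs \<pi>) (\<lambda>_. UNIV)" by (simp add: restrict_PiE_iff)
  next
    fix f :: "'n set \<Rightarrow> 'a" assume f: "f \<in> PiE (orbs \<pi>) (\<lambda>_. UNIV)"
    show "(\<Prod>O'\<in>orbs \<pi>. g O' (f (porb \<pi> (orep O')))) = (\<Prod>O'\<in>orbs \<pi>. g O' (f O'))"
      by (rule prod.cong) (auto simp: porb_orep[OF assms])
  qed
  finally show ?thesis by simp
qed

lemma orbs_partition:
  fixes h :: "'n::finite \<Rightarrow> 'c::comm_monoid_mult"
  assumes "\<pi> permutes UNIV"
  shows "(\<Prod>O'\<in>orbs \<pi>. \<Prod>k\<in>O'. h k) = (\<Prod>k\<in>UNIV. h k)"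
proof -
  have U: "\<Union>(orbs \<pi>) = UNIV"
  proof (rule set_eqI)
    fix x show "x \<in> \<Union>(orbs \<pi>) \<longleftrightarrow> x \<in> UNIV"
      using porb_self[of x \<pi>] unfolding orbs_def by (meson UNIV_I UnionI rangeI)
  qed
  have D: "\<forall>A\<in>orbs \<pi>. \<forall>B\<in>orbs \<pi>. A \<noteq> B \<longrightarrow> A \<inter> B = {}"
  proof (intro ballI impI)
    fix A B assume AB: "A \<in> orbs \<pi>" "B \<in> orbs \<pi>" "A \<noteq> B"
    then obtain a b where ab: "A = porb \<pi> a" "B = porb \<pi> b" unfolding orbs_def by (meson imageE)
    show "A \<inter> B = {}" unfolding ab by (rule porb_disj[OF assms]) (use AB(3) ab in simp)
  qed
  have F: "\<forall>A\<in>orbs \<pi>. finite A" by simp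
  have "prod h (\<Union>(orbs \<pi>)) = prod (prod h) (orbs \<pi>)"
    using prod.Union_disjoint[OF F D, of h] by (simp add: comp_def)
  then show ?thesis unfolding U by simp
qed

lemma olist_prop: "finite O' \<Longrightarrow> distinct (olist O') \<and> set (olist O') = O'"
  unfolding olist_def by (rule someI_ex) (metis finite_distinct_list)

lemma porb_id: "porb id k = {k}"
  unfolding porb_def by simp

lemma orbs_id: "orbs (id::'n\<Rightarrow>'n) = (\<lambda>k. {k}) ` UNIV"
  unfolding orbs_def porb_id by simp

lemma orep_single: "orep {k} = k"
  using orep_in[of "{k}"] by simp

lemma prod_orbs_id:
  fixes h :: "'n::finite \<Rightarrow> 'c::comm_monoid_mult"
  shows "(\<Prod>O'\<in>orbs id. h (orep O')) = (\<Prod>k\<in>UNIV. h k)"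
proof -
  have i: "inj (\<lambda>k::'n. {k})" by (simp add: inj_on_def)
  have "(\<Prod>O'\<in>orbs id. h (orep O')) = (\<Prod>O'\<in>(\<lambda>k. {k}) ` UNIV. h (orep O'))"
    by (simp only: orbs_id)
  also have "\<dots> = (\<Prod>k\<in>UNIV. h (orep {k}))"
    using prod.reindex[OF i, of "\<lambda>O'. h (orep O')"] by (simp add: comp_def)
  also have "\<dots> = (\<Prod>k\<in>UNIV. h k)" by (simp only: orep_single)
  finally show ?thesis .
qed


lemma sameorb_porb: "sameorb \<pi> i j \<longleftrightarrow> j \<in> porb \<pi> i"
  unfolding sameorb_def porb_def by (simp add: eq_commute)

lemma walk:
  fixes \<pi> :: "'n \<Rightarrow> 'n"
  assumes "\<And>k. 0 < k \<Longrightarrow> k < m \<Longrightarrow> (\<pi>^^k) i \<noteq> i \<and> (\<pi>^^k) i \<noteq> j"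
  shows "k < m \<Longrightarrow> ((transpose i j \<circ> \<pi>)^^k) i = (\<pi>^^k) i"
proof (induction k)
  case 0 show ?case by simp
next
  case (Suc k)
  have "((transpose i j \<circ> \<pi>)^^k) i = (\<pi>^^k) i" by (rule Suc.IH) (use Suc.prems in simp)
  then have "((transpose i j \<circ> \<pi>)^^Suc k) i = transpose i j ((\<pi>^^Suc k) i)" by simp
  also have "\<dots> = (\<pi>^^Suc k) i" using assms[of "Suc k"] Suc.prems by simp
  finally show ?case .
qed

lemma walk_end:
  fixes \<pi> :: "'n \<Rightarrow> 'n"
  assumes "\<And>k. 0 < k \<Longrightarrow> k < m \<Longrightarrow> (\<pi>^^k) i \<noteq> i \<and> (\<pi>^^k) i \<noteq> j" "0 < m"
  shows "((transpose i j \<circ> \<pi>)^^m) i = transpose i j ((\<pi>^^m) i)"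
proof -
  obtain m' where m': "m = Suc m'" using assms(2) by (cases m) auto
  have "((transpose i j \<circ> \<pi>)^^m') i = (\<pi>^^m') i" by (rule walk[OF assms(1)]) (use m' in auto)
  then show ?thesis unfolding m' by simp
qed

lemma ts1:
  fixes \<pi> :: "'n::finite \<Rightarrow> 'n"
  assumes "\<pi> permutes UNIV" "i \<noteq> j" "\<not> sameorb \<pi> i j"
  shows "sameorb (transpose i j \<circ> \<pi>) i j"
proof -
  obtain r where r: "\<pi>^^r = id" "r > 0"
    using permutation_is_nilpotent[OF perm_fin[OF assms(1)]] by metis
  define P where "P = (\<lambda>m. 0 < m \<and> (\<pi>^^m) i = i)"
  define m where "m = (LEAST m. P m)"
  have ex: "P r" using r unfolding P_def by simp
  have m: "P m" unfolding m_def by (rule LeastI[of P r]) (rule ex)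
  have nl: "(\<pi>^^k) i \<noteq> i \<and> (\<pi>^^k) i \<noteq> j" if "0<k" "k<m" for k
  proof
    have "\<not> P k" using not_less_Least[of k P] that unfolding m_def by simp
    then show "(\<pi>^^k) i \<noteq> i" using that unfolding P_def by simp
    show "(\<pi>^^k) i \<noteq> j" using assms(3) unfolding sameorb_def by simp
  qed
  have "((transpose i j \<circ> \<pi>)^^m) i = transpose i j ((\<pi>^^m) i)"
    by (rule walk_end[OF nl]) (use m in \<open>auto simp: P_def\<close>)
  then have "((transpose i j \<circ> \<pi>)^^m) i = j" using m unfolding P_def by simp
  then show ?thesis unfolding sameorb_def by (rule exI)
qed

lemma ts2:
  fixes \<pi> :: "'n \<Rightarrow> 'n"
  assumes "i \<noteq> j" "sameorb \<pi> i j"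
  shows "\<not> sameorb (transpose i j \<circ> \<pi>) i j"
proof
  define P where "P = (\<lambda>m. (\<pi>^^m) i = j)"
  define m where "m = (LEAST m. P m)"
  obtain m0 where "P m0" using assms(2) unfolding sameorb_def P_def by blast
  then have m: "(\<pi>^^m) i = j" unfolding m_def using LeastI[of P m0] unfolding P_def by simp
  have mpos: "0 < m" using m assms(1) by (cases m) auto
  have nj: "(\<pi>^^k) i \<noteq> j" if "k < m" for k
    using not_less_Least[of k P] that unfolding m_def P_def by simp
  have ni: "(\<pi>^^k) i \<noteq> i" if "0<k" "k<m" for k
  proof
    assume h: "(\<pi>^^k) i = i"
    have "(\<pi>^^(m-k)) i = (\<pi>^^(m-k)) ((\<pi>^^k) i)" using h by simp
    also have "\<dots> = (\<pi>^^(m-k+k)) i" by (simp only: funpow_add comp_apply)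
    also have "m-k+k = m" using that by simp
    finally have "(\<pi>^^(m-k)) i = j" using m by simp
    moreover have "m - k < m" using that by simp
    ultimately show False using nj[of "m-k"] by simp
  qed
  have nl: "(\<pi>^^k) i \<noteq> i \<and> (\<pi>^^k) i \<noteq> j" if "0<k" "k<m" for k
    using ni[OF that] nj[OF that(2)] by simp
  let ?f = "transpose i j \<circ> \<pi>"
  have w: "(?f^^k) i = (\<pi>^^k) i" if "k<m" for k by (rule walk[OF nl that])
  have per: "(?f^^m) i = i" using walk_end[OF nl mpos] m by simp
  assume "sameorb ?f i j"
  then obtain n where n: "(?f^^n) i = j" unfolding sameorb_def by blast
  have "(?f^^(n mod m)) i = j" using funpow_mod_eq[where f="transpose i j \<circ> \<pi>" and n=m and x=i and m=n] per n by simp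
  moreover have lt: "n mod m < m" using mpos by simp
  ultimately have "(\<pi>^^(n mod m)) i = j" using w[OF lt] by simp
  then show False using nj[OF lt] by simp
qed

lemma transpose_in: "i \<in> S \<Longrightarrow> j \<in> S \<Longrightarrow> y \<in> S \<Longrightarrow> transpose i j y \<in> S"
  unfolding transpose_def by simp

lemma label_transpose: "y i = y j \<Longrightarrow> y (transpose i j x) = y x"
  unfolding transpose_def by simp

lemma label_transpose_comp: "y i = y j \<Longrightarrow> y \<circ> transpose i j = y"
  by (rule ext) (simp add: label_transpose)

lemma perm_transpose_comp:
  "(\<pi>::'n \<Rightarrow> 'n) permutes UNIV \<Longrightarrow> (transpose i j \<circ> \<pi>) permutes UNIV"
  by (rule permutes_compose) (auto intro: permutes_swap_id)

lemma porb_outside: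
  fixes \<pi> :: "'n::finite \<Rightarrow> 'n"
  assumes "\<pi> permutes UNIV" "i \<in> porb \<pi> k" "j \<in> porb \<pi> k" "x \<notin> porb \<pi> k"
  shows "porb (transpose i j \<circ> \<pi>) x = porb \<pi> x"
proof -
  have d: "porb \<pi> x \<inter> porb \<pi> k = {}"
  proof (rule porb_disj[OF assms(1)])
    show "porb \<pi> x \<noteq> porb \<pi> k" using porb_self[of x \<pi>] assms(4) by auto
  qed
  have out: "(\<pi>^^n) x \<notin> porb \<pi> k" for n
  proof -
    have "(\<pi>^^n) x \<in> porb \<pi> x" by (rule porb_funpow[OF porb_self])
    then show ?thesis using d by blast
  qed
  have eq: "((transpose i j \<circ> \<pi>)^^n) x = (\<pi>^^n) x" for n
  proof (induction n)
    case 0 show ?case by simp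
  next
    case (Suc n)
    have ne: "(\<pi>^^Suc n) x \<noteq> i" "(\<pi>^^Suc n) x \<noteq> j" using out[of "Suc n"] assms(2,3) by auto
    show ?case using Suc ne by simp
  qed
  show ?thesis unfolding porb_def eq by simp
qed

lemma split_orbs:
  fixes \<pi> :: "'n::finite \<Rightarrow> 'n"
  assumes perm: "\<pi> permutes UNIV" and ij: "i \<noteq> j" and so: "sameorb \<pi> i j"
  defines "f \<equiv> transpose i j \<circ> \<pi>"
  defines "O0 \<equiv> porb \<pi> i" and "A \<equiv> porb f i" and "B \<equiv> porb f j"
  shows "orbs f = insert A (insert B (orbs \<pi> - {O0}))"
    and "A \<noteq> B" and "A \<notin> orbs \<pi> - {O0}" and "B \<notin> orbs \<pi> - {O0}"
    and "A \<subseteq> O0" and "B \<subseteq> O0" and "O0 \<in> orbs \<pi>"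
proof -
  have fperm: "f permutes UNIV" unfolding f_def by (rule perm_transpose_comp[OF perm])
  have iO: "i \<in> O0" unfolding O0_def by (rule porb_self)
  have jO: "j \<in> O0" using so unfolding O0_def sameorb_porb .
  have Oinv: "f x \<in> O0" if "x \<in> O0" for x
    unfolding f_def using transpose_in[OF iO jO porb_step[OF that[unfolded O0_def], folded O0_def]] by simp
  show AO: "A \<subseteq> O0" unfolding A_def by (rule porb_min[OF Oinv iO])
  show BO: "B \<subseteq> O0" unfolding B_def by (rule porb_min[OF Oinv jO])
  have iA: "i \<in> A" unfolding A_def by (rule porb_self)
  have jB: "j \<in> B" unfolding B_def by (rule porb_self)
  have jA: "j \<notin> A" using ts2[OF ij so] unfolding A_def f_def sameorb_porb .
  show AB: "A \<noteq> B" using jA jB by auto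
  have tt: "transpose i j (f x) = \<pi> x" for x unfolding f_def by simp
  have ABinv: "\<pi> x \<in> A \<union> B" if "x \<in> A \<union> B" for x
  proof -
    have fx: "f x \<in> A \<union> B"
    proof (cases "x \<in> A")
      case True then have "f x \<in> A" unfolding A_def by (rule porb_step)
      then show ?thesis by simp
    next
      case False then have "x \<in> B" using that by simp
      then have "f x \<in> B" unfolding B_def by (rule porb_step)
      then show ?thesis by simp
    qed
    have "transpose i j (f x) \<in> A \<union> B" using transpose_in[of i "A \<union> B" j "f x"] iA jB fx by simp
    then show ?thesis using tt by simp
  qed
  have OAB: "O0 \<subseteq> A \<union> B" unfolding O0_def
  proof (rule porb_min)
    fix x assume "x \<in> A \<union> B" then show "\<pi> x \<in> A \<union> B" by (rule ABinv)
  next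
    show "i \<in> A \<union> B" using iA by simp
  qed
  show O0o: "O0 \<in> orbs \<pi>" unfolding O0_def orbs_def by (rule rangeI)
  have restdisj: "O' \<inter> O0 = {}" if "O' \<in> orbs \<pi> - {O0}" for O'
  proof -
    have "O' \<in> range (porb \<pi>)" using that unfolding orbs_def by simp
    then obtain x where x: "O' = porb \<pi> x" by (rule rangeE)
    show ?thesis unfolding x O0_def by (rule porb_disj[OF perm]) (use that x O0_def in simp)
  qed
  show "A \<notin> orbs \<pi> - {O0}"
  proof
    assume "A \<in> orbs \<pi> - {O0}"
    then have "A \<inter> O0 = {}" by (rule restdisj)
    then show False using iA iO by auto
  qed
  show "B \<notin> orbs \<pi> - {O0}"
  proof
    assume "B \<in> orbs \<pi> - {O0}"
    then have "B \<inter> O0 = {}" by (rule restdisj)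
    then show False using jB jO by auto
  qed
  show "orbs f = insert A (insert B (orbs \<pi> - {O0}))"
  proof (rule set_eqI)
    fix X
    show "X \<in> orbs f \<longleftrightarrow> X \<in> insert A (insert B (orbs \<pi> - {O0}))"
    proof
      assume "X \<in> orbs f"
      then obtain x where x: "X = porb f x" unfolding orbs_def by blast
      show "X \<in> insert A (insert B (orbs \<pi> - {O0}))"
      proof (cases "x \<in> O0")
        case True
        then have "x \<in> A \<or> x \<in> B" using OAB by blast
        then show ?thesis
        proof
          assume "x \<in> A"
          then have "X = A" unfolding x A_def by (rule porb_eq[OF fperm])
          then show ?thesis by simp
        next
          assume "x \<in> B"
          then have "X = B" unfolding x B_def by (rule porb_eq[OF fperm])
          then show ?thesis by simp
        qed
      next
        case False
        have "X = porb \<pi> x" unfolding x f_def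
          by (rule porb_outside[OF perm]) (use iO jO False O0_def in auto)
        moreover have "porb \<pi> x \<noteq> O0" using porb_self[of x \<pi>] False by auto
        moreover have "porb \<pi> x \<in> orbs \<pi>" unfolding orbs_def by (rule rangeI)
        ultimately show ?thesis by simp
      qed
    next
      assume X: "X \<in> insert A (insert B (orbs \<pi> - {O0}))"
      show "X \<in> orbs f"
      proof (cases "X = A \<or> X = B")
        case True
        have "A \<in> orbs f" "B \<in> orbs f" unfolding A_def B_def orbs_def by (rule rangeI)+
        then show ?thesis using True by auto
      next
        case False
        then have X': "X \<in> orbs \<pi> - {O0}" using X by blast
        then obtain x where x: "X = porb \<pi> x" unfolding orbs_def by blast
        have "x \<notin> O0" using restdisj[OF X'] porb_self[of x \<pi>] x by blast
        then have "X = porb f x" unfolding x f_def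
          by (intro porb_outside[OF perm, symmetric]) (use iO jO O0_def in auto)
        then show ?thesis unfolding orbs_def by (simp only: rangeI)
      qed
    qed
  qed
qed

definition G :: "('a \<Rightarrow> complex) \<Rightarrow> ('n \<Rightarrow> 'a) \<Rightarrow> ('n \<Rightarrow> 'n) \<Rightarrow> complex" where
  "G s y \<pi> = (\<Prod>O'\<in>orbs \<pi>. s (y (orep O')))"

lemma G_split:
  fixes \<pi> :: "'n::finite \<Rightarrow> 'n"
  assumes perm: "\<pi> permutes UNIV" and ij: "i \<noteq> j" and so: "sameorb \<pi> i j"
    and sf: "sfixed \<pi> y"
  shows "G s y (transpose i j \<circ> \<pi>) = G s y \<pi> * s (y i)"
proof -
  let ?f = "transpose i j \<circ> \<pi>"
  let ?O = "porb \<pi> i" and ?A = "porb ?f i" and ?B = "porb ?f j"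
  let ?R = "orbs \<pi> - {?O}"
  let ?h = "\<lambda>O'. s (y (orep O'))"
  note sp = split_orbs[OF perm ij so]
  have lab: "y x = y i" if "x \<in> ?O" for x using sfixed_porb[OF sf that] .
  have "orep ?A \<in> ?O" using orep_porb[of ?f i] sp(5) by blast
  then have hA: "?h ?A = s (y i)" using lab by simp
  have "orep ?B \<in> ?O" using orep_porb[of ?f j] sp(6) by blast
  then have hB: "?h ?B = s (y i)" using lab by simp
  have hO: "?h ?O = s (y i)" using lab[OF orep_porb] by simp
  have "G s y ?f = ?h ?A * (?h ?B * prod ?h ?R)"
    unfolding G_def sp(1) using sp(2,3,4) by (simp add: prod.insert)
  moreover have "G s y \<pi> = ?h ?O * prod ?h ?R"
    unfolding G_def using prod.remove[OF finite sp(7), of ?h] by simp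
  ultimately show ?thesis using hA hB hO by (simp add: algebra_simps)
qed

lemma G_trans:
  fixes \<pi> :: "'n::finite \<Rightarrow> 'n"
  assumes perm: "\<pi> permutes UNIV" and ij: "i \<noteq> j" and sf: "sfixed \<pi> y"
    and yij: "y i = y j" and s0: "s (y i) \<noteq> 0"
  shows "G s y (transpose i j \<circ> \<pi>) =
           (if sameorb \<pi> i j then G s y \<pi> * s (y i) else G s y \<pi> / s (y i))"
proof (cases "sameorb \<pi> i j")
  case True then show ?thesis using G_split[OF perm ij True sf] by simp
next
  case False
  let ?f = "transpose i j \<circ> \<pi>"
  have fperm: "?f permutes UNIV" by (rule perm_transpose_comp[OF perm])
  have so': "sameorb ?f i j" by (rule ts1[OF perm ij False])
  have sf': "sfixed ?f y" using sf yij unfolding sfixed_def by (simp add: label_transpose)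
  have "G s y (transpose i j \<circ> ?f) = G s y ?f * s (y i)" by (rule G_split[OF fperm ij so' sf'])
  moreover have "transpose i j \<circ> ?f = \<pi>" by (simp add: comp_assoc[symmetric])
  ultimately show ?thesis using False s0 by simp
qed


lemma sum_UNIV_prod:
  fixes f :: "'n::finite \<Rightarrow> 'a::finite \<Rightarrow> 'c::comm_semiring_1"
  shows "(\<Sum>v\<in>UNIV. \<Prod>i\<in>UNIV. f i (v i)) = (\<Prod>i\<in>UNIV. \<Sum>c\<in>UNIV. f i c)"
  using prod_sum_PiE[of "UNIV::'n set" "\<lambda>_. UNIV::'a set" f] by simp

locale frules =
  fixes N :: "'a::finite \<Rightarrow> 'a \<Rightarrow> 'a \<Rightarrow> nat" and one :: 'a and dual :: "'a \<Rightarrow> 'a"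
    and S :: "'a \<Rightarrow> 'a \<Rightarrow> complex"
  assumes dual_dual: "\<And>a. dual (dual a) = a"
    and dual_one: "dual one = one"
    and N_one: "\<And>a b. N one a b = (if a = b then 1 else 0)"
    and S_sym: "\<And>a b. S a b = S b a"
    and S_orth: "\<And>a b. (\<Sum>x\<in>UNIV. S a x * cnj (S b x)) = (if a = b then 1 else 0)"
    and S_dual: "\<And>a b. S (dual a) b = cnj (S a b)"
    and S_one: "\<And>x. S one x \<noteq> 0"
    and verlinde: "\<And>a b c. of_nat (N a b c) = (\<Sum>x\<in>UNIV. S a x * S b x * cnj (S c x) / S one x)"
begin

definition chi :: "'a \<Rightarrow> 'a \<Rightarrow> complex" where
  "chi a x = S a x / S one x"

lemma chi_one[simp]: "chi one x = 1"
  unfolding chi_def using S_one by simp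

lemma col_orth: "(\<Sum>c\<in>UNIV. S c x * cnj (S c z)) = (if x = z then 1 else 0)"
  using S_orth[of x z] by (simp add: S_sym)

lemma N_S: "(\<Sum>c\<in>UNIV. of_nat (N a b c) * S c x) = S a x * S b x / S one x"
proof -
  have "(\<Sum>c\<in>UNIV. of_nat (N a b c) * S c x)
      = (\<Sum>c\<in>UNIV. \<Sum>z\<in>UNIV. (S a z * S b z / S one z) * (S c x * cnj (S c z)))"
    by (simp add: verlinde sum_distrib_left sum_distrib_right mult_ac)
  also have "\<dots> = (\<Sum>z\<in>UNIV. (S a z * S b z / S one z) * (\<Sum>c\<in>UNIV. S c x * cnj (S c z)))"
    by (subst sum.swap) (simp add: sum_distrib_left)
  also have "\<dots> = (\<Sum>z\<in>UNIV. (S a z * S b z / S one z) * (if x = z then 1 else 0))"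
    by (simp only: col_orth)
  also have "\<dots> = S a x * S b x / S one x"
    by (simp add: if_distrib cong: if_cong)
  finally show ?thesis .
qed

lemma N_chi: "(\<Sum>c\<in>UNIV. of_nat (N a b c) * chi c x) = chi a x * chi b x"
proof -
  have "(\<Sum>c\<in>UNIV. of_nat (N a b c) * chi c x) = (\<Sum>c\<in>UNIV. of_nat (N a b c) * S c x) / S one x"
    unfolding chi_def by (simp add: sum_divide_distrib)
  also have "\<dots> = chi a x * chi b x" unfolding N_S chi_def using S_one[of x]
    by (simp add: field_simps power2_eq_square)
  finally show ?thesis .
qed

lemma S_one_real: "cnj (S one x) = S one x"
  using S_dual[of one x] dual_one by simp

definition Phi :: "('n \<Rightarrow> 'a) \<Rightarrow> (('n::finite \<Rightarrow> 'a) \<Rightarrow> int) \<Rightarrow> complex" where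
  "Phi y u = (\<Sum>v\<in>UNIV. of_int (u v) * (\<Prod>i\<in>UNIV. chi (v i) (y i)))"

definition Psi :: "('n \<Rightarrow> 'n) \<Rightarrow> ('n \<Rightarrow> 'a) \<Rightarrow> (('n::finite \<Rightarrow> 'a) \<Rightarrow> int) \<Rightarrow> complex" where
  "Psi \<pi> y r = (\<Sum>b\<in>{b. sfixed \<pi> b}. of_int (r b) * (\<Prod>O'\<in>orbs \<pi>. chi (b (orep O')) (y (orep O'))))"

lemma Phi_amul: "Phi y (amul N u w) = Phi y u * Phi y w"
proof -
  let ?K = "\<lambda>v. \<Prod>i\<in>UNIV. chi (v i) (y i)"
  have "Phi y (amul N u w) = (\<Sum>v\<in>UNIV. \<Sum>a\<in>UNIV. \<Sum>b\<in>UNIV.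
          of_int (u a) * of_int (w b) * (\<Prod>i\<in>UNIV. of_nat (N (a i) (b i) (v i)) * chi (v i) (y i)))"
    unfolding Phi_def amul_def
    by (simp add: sum_distrib_left sum_distrib_right prod.distrib mult_ac)
  also have "\<dots> = (\<Sum>a\<in>UNIV. \<Sum>b\<in>UNIV. of_int (u a) * of_int (w b) *
          (\<Sum>v\<in>UNIV. \<Prod>i\<in>UNIV. of_nat (N (a i) (b i) (v i)) * chi (v i) (y i)))"
  proof -
    have "(\<Sum>v\<in>UNIV. \<Sum>a\<in>UNIV. \<Sum>b\<in>UNIV.
          of_int (u a) * of_int (w b) * (\<Prod>i\<in>UNIV. of_nat (N (a i) (b i) (v i)) * chi (v i) (y i)))
       = (\<Sum>a\<in>UNIV. \<Sum>b\<in>UNIV. \<Sum>v\<in>UNIV.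
          of_int (u a) * of_int (w b) * (\<Prod>i\<in>UNIV. of_nat (N (a i) (b i) (v i)) * chi (v i) (y i)))"
      by (subst sum.swap) (rule sum.cong[OF refl], rule sum.swap)
    then show ?thesis by (simp only: sum_distrib_left)
  qed
  also have "\<dots> = (\<Sum>a\<in>UNIV. \<Sum>b\<in>UNIV. of_int (u a) * of_int (w b) * (?K a * ?K b))"
  proof -
    have "(\<Sum>v\<in>UNIV. \<Prod>i\<in>UNIV. of_nat (N (a i) (b i) (v i)) * chi (v i) (y i)) = ?K a * ?K b" for a b
      by (subst sum_UNIV_prod) (simp only: N_chi prod.distrib)
    then show ?thesis by simp
  qed
  also have "\<dots> = Phi y u * Phi y w"
    unfolding Phi_def by (simp add: sum_product mult_ac)
  finally show ?thesis .
qed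

lemma Phi_delta: "Phi y (delta a) = (\<Prod>i\<in>UNIV. chi (a i) (y i))"
proof -
  let ?K = "\<lambda>v. \<Prod>i\<in>UNIV. chi (v i) (y i)"
  have "Phi y (delta a) = (\<Sum>v\<in>UNIV. if v = a then ?K v else 0)"
    unfolding Phi_def by (rule sum.cong) (auto simp: delta_def)
  then show ?thesis by simp
qed

lemma Phi_delta_one: "Phi y (delta (avec one)) = 1"
  unfolding Phi_delta avec_def by simp


lemma sum_delta_int:
  fixes K :: "'b \<Rightarrow> complex"
  assumes "finite A" "a \<in> A"
  shows "(\<Sum>v\<in>A. of_int (delta a v) * K v) = K a"
proof -
  have "(\<Sum>v\<in>A. of_int (delta a v) * K v) = (\<Sum>v\<in>A. if v = a then K v else 0)"
    by (rule sum.cong) (auto simp: delta_def)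
  then show ?thesis using assms by simp
qed

lemma fmul_delta_chi:
  "(\<Sum>c\<in>UNIV. of_int (fmul N (delta a) r c) * chi c x) = chi a x * (\<Sum>b\<in>UNIV. of_int (r b) * chi b x)"
proof -
  have f: "fmul N (delta a) r c = (\<Sum>b\<in>UNIV. r b * int (N a b c))" for c
  proof -
    have "fmul N (delta a) r c = (\<Sum>a'\<in>UNIV. if a' = a then (\<Sum>b\<in>UNIV. r b * int (N a' b c)) else 0)"
      unfolding fmul_def by (rule sum.cong) (auto simp: delta_def)
    then show ?thesis by simp
  qed
  have "(\<Sum>c\<in>UNIV. of_int (fmul N (delta a) r c) * chi c x)
      = (\<Sum>c\<in>UNIV. \<Sum>b\<in>UNIV. of_int (r b) * (of_nat (N a b c) * chi c x))"
    unfolding f by (simp add: sum_distrib_left sum_distrib_right mult_ac)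
  also have "\<dots> = (\<Sum>b\<in>UNIV. \<Sum>c\<in>UNIV. of_int (r b) * (of_nat (N a b c) * chi c x))"
    by (rule sum.swap)
  also have "\<dots> = (\<Sum>b\<in>UNIV. of_int (r b) * (chi a x * chi b x))"
    by (simp only: sum_distrib_left[symmetric] N_chi)
  also have "\<dots> = chi a x * (\<Sum>b\<in>UNIV. of_int (r b) * chi b x)"
    by (simp add: sum_distrib_left mult_ac)
  finally show ?thesis .
qed

lemma fprod_chi:
  "(\<Sum>c\<in>UNIV. of_int (fprod_list N one as c) * chi c x) = prod_list (map (\<lambda>a. chi a x) as)"
proof (induction as)
  case Nil
  show ?case unfolding fprod_list_def by (simp add: sum_delta_int)
next
  case (Cons a as)
  have "fprod_list N one (a # as) = fmul N (delta a) (fprod_list N one as)"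
    unfolding fprod_list_def by simp
  then show ?case using Cons by (simp add: fmul_delta_chi)
qed

lemma Psi_delta:
  assumes "sfixed \<pi> b"
  shows "Psi \<pi> y (delta b) = (\<Prod>O'\<in>orbs \<pi>. chi (b (orep O')) (y (orep O')))"
  unfolding Psi_def by (rule sum_delta_int) (use assms in auto)

lemma sfixed_avec: "sfixed \<pi> (avec one)"
  unfolding sfixed_def avec_def by simp

lemma Psi_delta_one: "Psi \<pi> y (delta (avec one)) = 1"
  using Psi_delta[OF sfixed_avec] unfolding avec_def by simp

lemma Psi_id: "Psi id y f = Phi y f"
proof -
  have "Psi id y f = (\<Sum>b\<in>UNIV. of_int (f b) * (\<Prod>O'\<in>orbs id. chi (b (orep O')) (y (orep O'))))"
    unfolding Psi_def sfixed_def by simp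
  also have "\<dots> = Phi y f" unfolding Phi_def
    by (simp only: prod_orbs_id[of "\<lambda>k. chi (_ k) (y k)"])
  finally show ?thesis .
qed

lemma Psi_rmul:
  fixes \<pi> :: "'n::finite \<Rightarrow> 'n"
  assumes perm: "\<pi> permutes UNIV"
  shows "Psi \<pi> y (rmul N \<pi> r s) = Psi \<pi> y r * Psi \<pi> y s"
proof -
  let ?SF = "{b::'n \<Rightarrow> 'a. sfixed \<pi> b}"
  let ?K = "\<lambda>b. \<Prod>O'\<in>orbs \<pi>. chi (b (orep O')) (y (orep O'))"
  have "Psi \<pi> y (rmul N \<pi> r s) = (\<Sum>b\<in>?SF. \<Sum>u\<in>?SF. \<Sum>w\<in>?SF. of_int (r u) * of_int (s w) *
          (\<Prod>O'\<in>orbs \<pi>. of_nat (N (u (orep O')) (w (orep O')) (b (orep O'))) * chi (b (orep O')) (y (orep O'))))"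
    unfolding Psi_def rmul_def by (simp add: sum_distrib_left sum_distrib_right prod.distrib mult_ac)
  also have "\<dots> = (\<Sum>u\<in>?SF. \<Sum>w\<in>?SF. \<Sum>b\<in>?SF. of_int (r u) * of_int (s w) *
          (\<Prod>O'\<in>orbs \<pi>. of_nat (N (u (orep O')) (w (orep O')) (b (orep O'))) * chi (b (orep O')) (y (orep O'))))"
    by (subst sum.swap) (rule sum.cong[OF refl], rule sum.swap)
  also have "\<dots> = (\<Sum>u\<in>?SF. \<Sum>w\<in>?SF. of_int (r u) * of_int (s w) * (?K u * ?K w))"
  proof -
    have "(\<Sum>b\<in>?SF. \<Prod>O'\<in>orbs \<pi>. of_nat (N (u (orep O')) (w (orep O')) (b (orep O'))) * chi (b (orep O')) (y (orep O')))
        = ?K u * ?K w" for u w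
      by (subst sum_sfixed_prod[OF perm]) (simp only: N_chi prod.distrib)
    then show ?thesis by (simp add: sum_distrib_left[symmetric])
  qed
  also have "\<dots> = Psi \<pi> y r * Psi \<pi> y s"
    unfolding Psi_def by (simp add: sum_product mult_ac)
  finally show ?thesis .
qed

lemma Psi_conf:
  fixes \<pi> :: "'n::finite \<Rightarrow> 'n"
  assumes perm: "\<pi> permutes UNIV" and sy: "sfixed \<pi> y"
  shows "Psi \<pi> y (conf N one \<pi> X) = Phi y X"
proof -
  let ?SF = "{b::'n \<Rightarrow> 'a. sfixed \<pi> b}"
  have "Psi \<pi> y (conf N one \<pi> X) = (\<Sum>b\<in>?SF. \<Sum>u\<in>UNIV. of_int (X u) *
          (\<Prod>O'\<in>orbs \<pi>. of_int (fprod_list N one (map u (olist O')) (b (orep O'))) * chi (b (orep O')) (y (orep O'))))"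
    unfolding Psi_def conf_def by (simp add: sum_distrib_left sum_distrib_right prod.distrib mult_ac)
  also have "\<dots> = (\<Sum>u\<in>UNIV. \<Sum>b\<in>?SF. of_int (X u) *
          (\<Prod>O'\<in>orbs \<pi>. of_int (fprod_list N one (map u (olist O')) (b (orep O'))) * chi (b (orep O')) (y (orep O'))))"
    by (rule sum.swap)
  also have "\<dots> = (\<Sum>u\<in>UNIV. of_int (X u) * (\<Prod>i\<in>UNIV. chi (u i) (y i)))"
  proof (rule sum.cong[OF refl])
    fix u :: "'n \<Rightarrow> 'a"
    have "(\<Sum>b\<in>?SF. \<Prod>O'\<in>orbs \<pi>. of_int (fprod_list N one (map u (olist O')) (b (orep O'))) * chi (b (orep O')) (y (orep O')))
        = (\<Prod>O'\<in>orbs \<pi>. prod_list (map (\<lambda>a. chi a (y (orep O'))) (map u (olist O'))))"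
      by (subst sum_sfixed_prod[OF perm]) (simp only: fprod_chi)
    also have "\<dots> = (\<Prod>O'\<in>orbs \<pi>. \<Prod>k\<in>O'. chi (u k) (y k))"
    proof (rule prod.cong[OF refl])
      fix O' assume O: "O' \<in> orbs \<pi>"
      have ol: "distinct (olist O')" "set (olist O') = O'" using olist_prop[of O'] by auto
      have "prod_list (map (\<lambda>a. chi a (y (orep O'))) (map u (olist O'))) = (\<Prod>k\<in>set (olist O'). chi (u k) (y (orep O')))"
        using prod.distinct_set_conv_list[OF ol(1), of "\<lambda>k. chi (u k) (y (orep O'))"] by (simp add: comp_def)
      also have "\<dots> = (\<Prod>k\<in>O'. chi (u k) (y k))"
        unfolding ol(2) by (rule prod.cong[OF refl]) (simp add: sfixed_orep[OF sy O])
      finally show "prod_list (map (\<lambda>a. chi a (y (orep O'))) (map u (olist O'))) = (\<Prod>k\<in>O'. chi (u k) (y k))" .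
    qed
    also have "\<dots> = (\<Prod>k\<in>UNIV. chi (u k) (y k))" by (rule orbs_partition[OF perm])
    finally show "(\<Sum>b\<in>?SF. of_int (X u) *
          (\<Prod>O'\<in>orbs \<pi>. of_int (fprod_list N one (map u (olist O')) (b (orep O'))) * chi (b (orep O')) (y (orep O'))))
        = of_int (X u) * (\<Prod>i\<in>UNIV. chi (u i) (y i))"
      by (simp add: sum_distrib_left[symmetric])
  qed
  also have "\<dots> = Phi y X" unfolding Phi_def ..
  finally show ?thesis .
qed


lemma prod_indicator_eq:
  fixes F :: "'b set"
  assumes "finite F"
  shows "(\<Prod>O'\<in>F. (if P O' then 1 else 0 :: complex)) = (if (\<forall>O'\<in>F. P O') then 1 else 0)"
proof (cases "\<forall>O'\<in>F. P O'")
  case True then show ?thesis by simp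
next
  case False
  then obtain O' where "O' \<in> F" "\<not> P O'" by blast
  then show ?thesis using assms False by (simp add: prod_zero_iff)
qed

lemma Psi_inv:
  fixes \<pi> :: "'n::finite \<Rightarrow> 'n"
  assumes perm: "\<pi> permutes UNIV" and sb: "sfixed \<pi> b"
  shows "(\<Sum>y\<in>{y. sfixed \<pi> y}. Psi \<pi> y r *
            (\<Prod>O'\<in>orbs \<pi>. S one (y (orep O')) * cnj (S (b (orep O')) (y (orep O'))))) = of_int (r b)"
proof -
  let ?SF = "{b::'n \<Rightarrow> 'a. sfixed \<pi> b}"
  have "(\<Sum>y\<in>?SF. Psi \<pi> y r * (\<Prod>O'\<in>orbs \<pi>. S one (y (orep O')) * cnj (S (b (orep O')) (y (orep O')))))
      = (\<Sum>y\<in>?SF. \<Sum>b'\<in>?SF. of_int (r b') *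
           (\<Prod>O'\<in>orbs \<pi>. S (b' (orep O')) (y (orep O')) * cnj (S (b (orep O')) (y (orep O')))))"
  proof (rule sum.cong[OF refl])
    fix y
    have "(\<Prod>O'\<in>orbs \<pi>. chi (b' (orep O')) (y (orep O'))) *
          (\<Prod>O'\<in>orbs \<pi>. S one (y (orep O')) * cnj (S (b (orep O')) (y (orep O')))) =
          (\<Prod>O'\<in>orbs \<pi>. S (b' (orep O')) (y (orep O')) * cnj (S (b (orep O')) (y (orep O'))))" for b'
      unfolding prod.distrib[symmetric]
      by (rule prod.cong[OF refl]) (simp add: chi_def S_one)
    then show "Psi \<pi> y r * (\<Prod>O'\<in>orbs \<pi>. S one (y (orep O')) * cnj (S (b (orep O')) (y (orep O')))) =
       (\<Sum>b'\<in>?SF. of_int (r b') *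
           (\<Prod>O'\<in>orbs \<pi>. S (b' (orep O')) (y (orep O')) * cnj (S (b (orep O')) (y (orep O')))))"
      unfolding Psi_def sum_distrib_right by (simp add: mult.assoc)
  qed
  also have "\<dots> = (\<Sum>b'\<in>?SF. \<Sum>y\<in>?SF. of_int (r b') *
           (\<Prod>O'\<in>orbs \<pi>. S (b' (orep O')) (y (orep O')) * cnj (S (b (orep O')) (y (orep O')))))"
    by (rule sum.swap)
  also have "\<dots> = (\<Sum>b'\<in>?SF. of_int (r b') * (if b' = b then 1 else 0))"
  proof (rule sum.cong[OF refl])
    fix b' assume b': "b' \<in> ?SF"
    have "(\<Sum>y\<in>?SF. \<Prod>O'\<in>orbs \<pi>. S (b' (orep O')) (y (orep O')) * cnj (S (b (orep O')) (y (orep O'))))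
        = (\<Prod>O'\<in>orbs \<pi>. (if b' (orep O') = b (orep O') then 1 else 0))"
      by (subst sum_sfixed_prod[OF perm]) (simp only: S_orth)
    also have "\<dots> = (if b' = b then 1 else 0)"
      using sfixed_eq_orbs[OF perm _ sb, of b'] b' by (simp add: prod_indicator_eq)
    finally show "(\<Sum>y\<in>?SF. of_int (r b') *
           (\<Prod>O'\<in>orbs \<pi>. S (b' (orep O')) (y (orep O')) * cnj (S (b (orep O')) (y (orep O')))))
        = of_int (r b') * (if b' = b then 1 else 0)"
      by (simp add: sum_distrib_left[symmetric])
  qed
  also have "\<dots> = of_int (r b)" using sb by (simp add: if_distrib cong: if_cong)
  finally show ?thesis .
qed

lemma Psi_inj:
  fixes \<pi> :: "'n::finite \<Rightarrow> 'n"
  assumes perm: "\<pi> permutes UNIV"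
    and r: "\<And>v. \<not> sfixed \<pi> v \<Longrightarrow> r v = 0" and r': "\<And>v. \<not> sfixed \<pi> v \<Longrightarrow> r' v = 0"
    and eq: "\<And>y. sfixed \<pi> y \<Longrightarrow> Psi \<pi> y r = Psi \<pi> y r'"
  shows "r = r'"
proof
  fix b
  show "r b = r' b"
  proof (cases "sfixed \<pi> b")
    case True
    have "(of_int (r b) :: complex) = of_int (r' b)"
      unfolding Psi_inv[OF perm True, symmetric, of r] Psi_inv[OF perm True, symmetric, of r']
      by (rule sum.cong[OF refl]) (simp add: eq)
    then show ?thesis by simp
  next
    case False then show ?thesis using r r' by simp
  qed
qed

lemma Phi_Omega:
  fixes i j :: "'n::finite"
  assumes ij: "i \<noteq> j"
  shows "Phi y (Omega dual one i j) = (if y i = y j then 1 / (S one (y i))^2 else 0)"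
proof -
  define vc where "vc = (\<lambda>c k. if k = i then c else if k = j then dual c else one)"
  let ?K = "\<lambda>v. \<Prod>k\<in>UNIV. chi (v k) (y k)"
  have inj: "inj vc" unfolding vc_def inj_def by (metis (full_types))
  have V: "{v. Omega dual one i j v = 1} = range vc"
  proof (rule set_eqI)
    fix v
    show "v \<in> {v. Omega dual one i j v = 1} \<longleftrightarrow> v \<in> range vc"
    proof
      assume "v \<in> {v. Omega dual one i j v = 1}"
      then have h: "v j = dual (v i)" "\<And>k. k \<noteq> i \<Longrightarrow> k \<noteq> j \<Longrightarrow> v k = one"
        unfolding Omega_def by (auto split: if_splits)
      have "v = vc (v i)" unfolding vc_def using h ij by (auto simp: fun_eq_iff)
      then show "v \<in> range vc" by (rule range_eqI)
    next
      assume "v \<in> range vc"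
      then obtain c where "v = vc c" by blast
      then show "v \<in> {v. Omega dual one i j v = 1}" unfolding Omega_def vc_def using ij by simp
    qed
  qed
  have "Phi y (Omega dual one i j) = (\<Sum>v\<in>UNIV. if Omega dual one i j v = 1 then ?K v else 0)"
    unfolding Phi_def by (rule sum.cong[OF refl]) (simp add: Omega_def)
  also have "\<dots> = (\<Sum>v\<in>{v. Omega dual one i j v = 1}. ?K v)"
    by (simp add: sum.If_cases)
  also have "\<dots> = (\<Sum>c\<in>UNIV. ?K (vc c))" unfolding V
    using sum.reindex[OF inj, of ?K] by (simp add: comp_def)
  also have "\<dots> = (\<Sum>c\<in>UNIV. chi c (y i) * chi (dual c) (y j))"
  proof (rule sum.cong[OF refl])
    fix c
    have "?K (vc c) = (\<Prod>k\<in>UNIV. (if k = i then chi c (y i) else 1) * (if k = j then chi (dual c) (y j) else 1))"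
      by (rule prod.cong[OF refl]) (use ij in \<open>auto simp: vc_def\<close>)
    also have "\<dots> = chi c (y i) * chi (dual c) (y j)"
      by (simp add: prod.distrib)
    finally show "?K (vc c) = chi c (y i) * chi (dual c) (y j)" .
  qed
  also have "\<dots> = (\<Sum>c\<in>UNIV. S c (y i) * cnj (S c (y j))) / (S one (y i) * S one (y j))"
    unfolding chi_def S_dual by (simp add: sum_divide_distrib)
  also have "\<dots> = (if y i = y j then 1 / (S one (y i))^2 else 0)"
    unfolding col_orth by (simp add: power2_eq_square)
  finally show ?thesis .
qed

end


definition tp :: "('n \<times> 'n) list \<Rightarrow> ('n \<Rightarrow> 'n) \<Rightarrow> 'n \<Rightarrow> 'n" where
  "tp ts \<sigma> = foldr (\<lambda>(i', j') p. transpose i' j' \<circ> p) ts \<sigma>"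

lemma tp_Nil[simp]: "tp [] \<sigma> = \<sigma>" unfolding tp_def by simp
lemma tp_Cons[simp]: "tp ((i,j) # ts) \<sigma> = transpose i j \<circ> tp ts \<sigma>" unfolding tp_def by simp
lemma tp_append: "tp (xs @ ys) \<sigma> = tp xs (tp ys \<sigma>)" unfolding tp_def by simp

lemma tp_comp: "tp ts \<sigma> = tp ts id \<circ> \<sigma>"
  by (induction ts) (auto simp: comp_assoc)

lemma tp_perm: "(\<sigma>::'n \<Rightarrow> 'n) permutes UNIV \<Longrightarrow> tp ts \<sigma> permutes UNIV"
  by (induction ts) (auto intro: perm_transpose_comp)

lemma Fword_Cons:
  "Fword N dual one ((i,j) # ts) \<sigma> =
     amul N (if sameorb (tp ts \<sigma>) i j then Omega dual one i j else delta (avec one)) (Fword N dual one ts \<sigma>)"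
  unfolding tp_def by (simp add: Let_def)

definition elems :: "('n \<times> 'n) list \<Rightarrow> 'n set" where
  "elems ts = (\<Union>(a,b)\<in>set ts. {a,b})"

fun nofix :: "('n \<times> 'n) list \<Rightarrow> bool" where
  "nofix [] = True"
| "nofix ((i,j) # ts) = (i \<noteq> j \<and> i \<notin> elems ts \<and> nofix ts)"

lemma elems_Nil[simp]: "elems [] = {}" unfolding elems_def by simp
lemma elems_Cons[simp]: "elems ((i,j) # ts) = insert i (insert j (elems ts))" unfolding elems_def by auto
lemma elems_append[simp]: "elems (xs @ ys) = elems xs \<union> elems ys" unfolding elems_def by auto

lemma nofix_append:
  "nofix xs \<Longrightarrow> nofix ys \<Longrightarrow> (\<forall>(a,b)\<in>set xs. a \<notin> elems ys) \<Longrightarrow> nofix (xs @ ys)"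
  by (induction xs rule: nofix.induct) auto

lemma elems_zip: "elems (zip c (tl c)) \<subseteq> set c"
proof (induction c rule: cycle_of_list.induct)
  case (1 i j cs) then show ?case by auto
qed (auto simp: elems_def)

lemma nofix_zip: "distinct c \<Longrightarrow> nofix (zip c (tl c))"
proof (induction c rule: cycle_of_list.induct)
  case (1 i j cs)
  have "zip (i # j # cs) (tl (i # j # cs)) = (i, j) # zip (j # cs) (tl (j # cs))" by simp
  moreover have "i \<notin> elems (zip (j # cs) (tl (j # cs)))" using elems_zip[of "j # cs"] 1(2) by auto
  ultimately show ?case using 1 by simp
qed (auto)

lemma fst_zip_in: "(a,b) \<in> set (zip c (tl c)) \<Longrightarrow> a \<in> set c"
  by (meson in_set_zipE)

lemma elems_transp: "elems (transp_list cs) \<subseteq> set (concat cs)"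
  unfolding transp_list_def elems_def using elems_zip unfolding elems_def by fastforce

lemma nofix_transp: "distinct (concat cs) \<Longrightarrow> nofix (transp_list cs)"
proof (induction cs)
  case Nil then show ?case by (simp add: transp_list_def)
next
  case (Cons c cs)
  have tl: "transp_list (c # cs) = zip c (tl c) @ transp_list cs" unfolding transp_list_def by simp
  have d: "distinct c" "distinct (concat cs)" "set c \<inter> set (concat cs) = {}" using Cons.prems by auto
  show ?case unfolding tl
  proof (rule nofix_append)
    show "nofix (zip c (tl c))" by (rule nofix_zip[OF d(1)])
    show "nofix (transp_list cs)" by (rule Cons.IH[OF d(2)])
    show "\<forall>(a,b)\<in>set (zip c (tl c)). a \<notin> elems (transp_list cs)"
      using fst_zip_in elems_transp[of cs] d(3) by fastforce
  qed
qed

lemma cycle_tp: "cycle_of_list c = tp (zip c (tl c)) id"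
  by (induction c rule: cycle_of_list.induct) auto

lemma decomp_tp: "foldr (\<lambda>c p. cycle_of_list c \<circ> p) cs id = tp (transp_list cs) id"
proof (induction cs)
  case Nil then show ?case by (simp add: transp_list_def)
next
  case (Cons c cs)
  have tl: "transp_list (c # cs) = zip c (tl c) @ transp_list cs" unfolding transp_list_def by simp
  have "foldr (\<lambda>c p. cycle_of_list c \<circ> p) (c # cs) id = cycle_of_list c \<circ> foldr (\<lambda>c p. cycle_of_list c \<circ> p) cs id"
    by simp
  also have "\<dots> = tp (zip c (tl c)) id \<circ> tp (transp_list cs) id"
    by (simp only: Cons.IH) (simp only: cycle_tp)
  also have "\<dots> = tp (zip c (tl c)) (tp (transp_list cs) id)" by (rule tp_comp[symmetric])
  also have "\<dots> = tp (transp_list (c#cs)) id" by (simp add: tl tp_append)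
  finally show ?case .
qed

lemma sfixed_id: "sfixed id y" by (simp add: sfixed_def)

lemma tp_fix: "i \<notin> elems ts \<Longrightarrow> tp ts id i = i"
  by (induction ts) auto

lemma nofix_pairs: "nofix ts \<Longrightarrow> (i,j) \<in> set ts \<Longrightarrow> i \<noteq> j"
  by (induction ts rule: nofix.induct) auto

lemma label_tp: "(\<forall>(i,j)\<in>set ts. y i = y j) \<Longrightarrow> y \<circ> tp ts id = y"
proof (induction ts)
  case Nil then show ?case by simp
next
  case (Cons p ts)
  obtain i j where p: "p = (i,j)" by fastforce
  have h: "y i = y j" "\<forall>(i,j)\<in>set ts. y i = y j" using Cons.prems p by auto
  have e1: "y \<circ> transpose i j = y" by (rule label_transpose_comp[of y i j, OF h(1)])
  have e2: "y \<circ> tp ts id = y" by (rule Cons.IH[OF h(2)])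
  show ?case unfolding p tp_Cons by (simp only: comp_assoc[symmetric] e1 e2)
qed

context frules
begin

abbreviation s1 :: "'a \<Rightarrow> complex" where "s1 \<equiv> S one"

lemma Phi_Fword_Cons:
  assumes "i \<noteq> j"
  shows "Phi y (Fword N dual one ((i,j) # ts) \<sigma>) =
    (if sameorb (tp ts \<sigma>) i j then (if y i = y j then 1 / (s1 (y i))^2 else 0) else 1) * Phi y (Fword N dual one ts \<sigma>)"
  unfolding Fword_Cons Phi_amul by (simp add: Phi_Omega[OF assms] Phi_delta_one)

lemma CL2:
  fixes \<sigma> :: "'n::finite \<Rightarrow> 'n"
  assumes "\<sigma> permutes UNIV" "\<forall>(i,j)\<in>set ts. i \<noteq> j" "sfixed (tp ts \<sigma>) y"
    "Phi y (Fword N dual one ts \<sigma>) \<noteq> 0"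
  shows "sfixed \<sigma> y \<and> (\<forall>(i,j)\<in>set ts. y i = y j)"
  using assms(2-4)
proof (induction ts)
  case Nil then show ?case by simp
next
  case (Cons p ts)
  obtain i j where p: "p = (i,j)" by fastforce
  have ij: "i \<noteq> j" and ok: "\<forall>(i,j)\<in>set ts. i \<noteq> j" using Cons.prems(1) p by auto
  let ?\<pi> = "tp ts \<sigma>"
  have perm: "?\<pi> permutes UNIV" by (rule tp_perm[OF assms(1)])
  have sf: "sfixed (transpose i j \<circ> ?\<pi>) y" using Cons.prems(2) unfolding p by (simp only: tp_Cons)
  have nz: "(if sameorb ?\<pi> i j then (if y i = y j then 1 / (s1 (y i))^2 else 0) else 1) \<noteq> 0"
       "Phi y (Fword N dual one ts \<sigma>) \<noteq> 0"
    using Cons.prems(3) unfolding p Phi_Fword_Cons[OF ij] by auto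
  have yij: "y i = y j"
  proof (cases "sameorb ?\<pi> i j")
    case True then show ?thesis using nz(1) by (auto split: if_splits)
  next
    case False
    have "sameorb (transpose i j \<circ> ?\<pi>) i j" by (rule ts1[OF perm ij False])
    then have "j \<in> porb (transpose i j \<circ> ?\<pi>) i" by (simp add: sameorb_porb)
    then show ?thesis using sfixed_porb[OF sf] by simp
  qed
  have "sfixed ?\<pi> y"
  proof -
    have "y \<circ> (transpose i j \<circ> ?\<pi>) = y" using sf by (simp add: sfixed_iff)
    then have "(y \<circ> transpose i j) \<circ> ?\<pi> = y" by (simp add: comp_assoc)
    then show ?thesis using label_transpose_comp[of y i j, OF yij] by (simp add: sfixed_iff)
  qed
  then have "sfixed \<sigma> y \<and> (\<forall>(i,j)\<in>set ts. y i = y j)" using Cons.IH[OF ok _ nz(2)] by simp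
  then show ?case using yij p by simp
qed

lemma G_nz: "G s1 y (\<pi>::'n::finite \<Rightarrow> 'n) \<noteq> 0"
  unfolding G_def by (subst prod_zero_iff) (simp_all add: S_one finite)

lemma CL1:
  fixes \<sigma> :: "'n::finite \<Rightarrow> 'n"
  assumes "\<sigma> permutes UNIV" "\<forall>(i,j)\<in>set ts. i \<noteq> j" "sfixed \<sigma> y" "\<forall>(i,j)\<in>set ts. y i = y j"
  shows "Phi y (Fword N dual one ts \<sigma>) * G s1 y (tp ts \<sigma>) = G s1 y \<sigma> * prod_list (map (\<lambda>(i,j). 1 / s1 (y i)) ts)"
  using assms(2,4)
proof (induction ts)
  case Nil then show ?case by (simp add: Phi_delta_one)
next
  case (Cons p ts)
  obtain i j where p: "p = (i,j)" by fastforce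
  have ij: "i \<noteq> j" and ok: "\<forall>(i,j)\<in>set ts. i \<noteq> j" using Cons.prems(1) p by auto
  have yij: "y i = y j" and oky: "\<forall>(i,j)\<in>set ts. y i = y j" using Cons.prems(2) p by auto
  let ?\<pi> = "tp ts \<sigma>"
  have perm: "?\<pi> permutes UNIV" by (rule tp_perm[OF assms(1)])
  have sfp: "sfixed ?\<pi> y"
  proof -
    have "y \<circ> ?\<pi> = (y \<circ> tp ts id) \<circ> \<sigma>" by (simp add: tp_comp[of ts \<sigma>] comp_assoc)
    also have "\<dots> = y" using label_tp[OF oky] assms(3) by (simp add: sfixed_iff)
    finally show ?thesis by (simp add: sfixed_iff)
  qed
  have IH: "Phi y (Fword N dual one ts \<sigma>) * G s1 y ?\<pi> = G s1 y \<sigma> * prod_list (map (\<lambda>(i,j). 1 / s1 (y i)) ts)"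
    by (rule Cons.IH[OF ok oky])
  have s0: "s1 (y i) \<noteq> 0" by (rule S_one)
  have Gt: "G s1 y (transpose i j \<circ> ?\<pi>) = (if sameorb ?\<pi> i j then G s1 y ?\<pi> * s1 (y i) else G s1 y ?\<pi> / s1 (y i))"
    by (rule G_trans[of "tp ts \<sigma>" i j y s1, OF perm ij sfp yij s0])
  show ?case
  proof (cases "sameorb ?\<pi> i j")
    case True
    show ?thesis unfolding p tp_Cons Phi_Fword_Cons[OF ij] Gt using True yij s0 IH
      by (simp add: power2_eq_square field_simps)
  next
    case False
    show ?thesis unfolding p tp_Cons Phi_Fword_Cons[OF ij] Gt using False s0 IH
      by (simp add: field_simps)
  qed
qed

lemma CL3:
  "nofix ts \<Longrightarrow> Phi y (Fword N dual one ts id) = 1"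
proof (induction ts rule: nofix.induct)
  case 1 then show ?case by (simp add: Phi_delta_one)
next
  case (2 i j ts)
  have h: "i \<noteq> j" "i \<notin> elems ts" "nofix ts" using 2(2) by auto
  have "porb (tp ts id) i = {i}"
  proof -
    have fx: "tp ts id i = i" by (rule tp_fix[OF h(2)])
    have "((tp ts id)^^m) i = i" for m
    proof (induction m)
      case 0 show ?case by simp
    next
      case (Suc m) show ?case by (simp only: funpow.simps(2) comp_apply Suc.IH fx)
    qed
    then show ?thesis unfolding porb_def by simp
  qed
  then have ns: "\<not> sameorb (tp ts id) i j" using h(1) by (simp add: sameorb_porb)
  have IH: "Phi y (Fword N dual one ts id) = 1" by (rule 2(1)[OF h(3)])
  show ?case unfolding Phi_Fword_Cons[OF h(1)] if_not_P[OF ns] IH by simp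
qed

definition Wt :: "('n \<Rightarrow> 'a) \<Rightarrow> ('n \<Rightarrow> 'n) \<Rightarrow> ('n \<Rightarrow> 'n) \<Rightarrow> complex" where
  "Wt y \<rho> \<sigma> = G s1 y \<rho> * G s1 y \<sigma> / (G s1 y (\<rho> \<circ> \<sigma>) * G s1 y id)"

lemma Fval:
  fixes \<rho> \<sigma> :: "'n::finite \<Rightarrow> 'n"
  assumes "\<rho> permutes UNIV" "\<sigma> permutes UNIV" "is_cycle_decomp \<rho> cs" "sfixed (\<rho> \<circ> \<sigma>) y"
  shows "Phi y (Fword N dual one (transp_list cs) \<sigma>) = (if sfixed \<rho> y then Wt y \<rho> \<sigma> else 0)"
proof -
  let ?ts = "transp_list cs"
  have dc: "distinct (concat cs)" and rho: "\<rho> = tp ?ts id"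
    using assms(3) unfolding is_cycle_decomp_def decomp_tp by auto
  have nf: "nofix ?ts" by (rule nofix_transp[OF dc])
  have ok: "\<forall>(i,j)\<in>set ?ts. i \<noteq> j" using nofix_pairs[OF nf] by auto
  have tps: "tp ?ts \<sigma> = \<rho> \<circ> \<sigma>" using rho tp_comp[of ?ts \<sigma>] by simp
  show ?thesis
  proof (cases "sfixed \<rho> y")
    case True
    have sfs: "sfixed \<sigma> y"
    proof -
      have "y \<circ> (\<rho> \<circ> \<sigma>) = y" "y \<circ> \<rho> = y" using assms(4) True by (simp_all add: sfixed_iff)
      then have "y \<circ> \<sigma> = y" by (metis comp_assoc)
      then show ?thesis by (simp add: sfixed_iff)
    qed
    have pe: "\<forall>(i,j)\<in>set ?ts. y i = y j"
      using CL2[OF permutes_id ok _ , of y] True CL3[OF nf, of y] rho by simp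
    have c1: "Phi y (Fword N dual one ?ts id) * G s1 y \<rho> = G s1 y id * prod_list (map (\<lambda>(i,j). 1 / s1 (y i)) ?ts)"
      using CL1[OF permutes_id ok sfixed_id pe] rho by simp
    have c2: "Phi y (Fword N dual one ?ts \<sigma>) * G s1 y (\<rho> \<circ> \<sigma>) = G s1 y \<sigma> * prod_list (map (\<lambda>(i,j). 1 / s1 (y i)) ?ts)"
      using CL1[OF assms(2) ok sfs pe] tps by simp
    have "Phi y (Fword N dual one ?ts \<sigma>) = Wt y \<rho> \<sigma>"
      using c1 c2 CL3[OF nf, of y] G_nz[of y] unfolding Wt_def
      by (simp add: field_simps)
    then show ?thesis using True by simp
  next
    case False
    have "Phi y (Fword N dual one ?ts \<sigma>) = 0"
    proof (rule ccontr)
      assume nz: "Phi y (Fword N dual one ?ts \<sigma>) \<noteq> 0"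
      have "\<forall>(i,j)\<in>set ?ts. y i = y j" using CL2[OF assms(2) ok _ nz] assms(4) tps by simp
      then have "y \<circ> \<rho> = y" using label_tp rho by metis
      then show False using False by (simp add: sfixed_iff)
    qed
    then show ?thesis using False by simp
  qed
qed

end


locale rsetup = frules N one dual S
  for N :: "'a::finite \<Rightarrow> 'a \<Rightarrow> 'a \<Rightarrow> nat" and one dual S +
  fixes D :: "('n::finite \<Rightarrow> 'n) \<Rightarrow> ('n \<Rightarrow> 'a) \<Rightarrow> ('n \<Rightarrow> 'a) \<Rightarrow> int"
    and dec :: "('n \<Rightarrow> 'n) \<Rightarrow> 'n list list"
  assumes deconf: "is_deconf N one D"
    and decomp: "\<And>\<rho>. \<rho> permutes UNIV \<Longrightarrow> is_cycle_decomp \<rho> (dec \<rho>)"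
begin

lemma Wt_id_left: "Wt y id (\<sigma>::'n \<Rightarrow> 'n) = 1"
  unfolding Wt_def using G_nz[of y \<sigma>] G_nz[of y id] by simp

lemma Wt_id_right: "Wt y (\<rho>::'n \<Rightarrow> 'n) id = 1"
  unfolding Wt_def using G_nz[of y \<rho>] G_nz[of y id] by simp

lemma Phi_D:
  assumes "\<rho> permutes UNIV" "sfixed \<rho> a" "sfixed \<rho> y"
  shows "Phi y (D \<rho> a) = Psi \<rho> y (delta a)"
proof -
  have "rmul N \<rho> (conf N one \<rho> (D \<rho> a)) (delta (avec one)) = delta a"
    using deconf assms(1,2) unfolding is_deconf_def by blast
  then have "Psi \<rho> y (delta a) = Psi \<rho> y (conf N one \<rho> (D \<rho> a)) * Psi \<rho> y (delta (avec one))"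
    using Psi_rmul[OF assms(1)] by metis
  also have "\<dots> = Phi y (D \<rho> a)" unfolding Psi_conf[OF assms(1,3)] Psi_delta_one by simp
  finally show ?thesis by simp
qed

lemma sfixed_comp_left:
  "sfixed (\<rho> \<circ> \<sigma>) y \<Longrightarrow> sfixed \<rho> y \<Longrightarrow> sfixed \<sigma> y"
  unfolding sfixed_def by (metis comp_apply)

lemma KB:
  assumes rp: "\<rho> permutes UNIV" and sp: "\<sigma> permutes UNIV"
    and sa: "sfixed \<rho> a" and sb: "sfixed \<sigma> b" and sy: "sfixed (\<rho> \<circ> \<sigma>) y"
  shows "Psi (\<rho> \<circ> \<sigma>) y (bprod N dual one D dec \<rho> a \<sigma> b (\<rho> \<circ> \<sigma>)) =
           (if sfixed \<rho> y \<and> sfixed \<sigma> y then Psi \<rho> y (delta a) * Psi \<sigma> y (delta b) * Wt y \<rho> \<sigma> else 0)"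
proof -
  have rsp: "\<rho> \<circ> \<sigma> permutes UNIV" by (rule permutes_compose[OF sp rp])
  show ?thesis
  proof (cases "\<rho> = id")
    case rid: True
    show ?thesis
    proof (cases "\<sigma> = id")
      case sid: True
      show ?thesis unfolding rid sid bprod_def Xr_def
        by (simp add: Psi_id Phi_amul Wt_id_left sfixed_id)
    next
      case sid: False
      have sy': "sfixed \<sigma> y" using sy rid by simp
      show ?thesis unfolding bprod_def Xr_def using rid sid sy'
        by (simp add: Psi_rmul[OF sp] Psi_conf[OF sp sy'] Psi_id Wt_id_left sfixed_id)
    qed
  next
    case rid: False
    show ?thesis
    proof (cases "\<sigma> = id")
      case sid: True
      have sy': "sfixed \<rho> y" using sy sid by simp
      show ?thesis unfolding bprod_def Xr_def using rid sid sy'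
        by (simp add: Psi_rmul[OF rp] Psi_conf[OF rp sy'] Psi_id Wt_id_right sfixed_id mult_ac)
    next
      case sid: False
      let ?F = "Fword N dual one (transp_list (dec \<rho>)) \<sigma>"
      have "Psi (\<rho> \<circ> \<sigma>) y (bprod N dual one D dec \<rho> a \<sigma> b (\<rho> \<circ> \<sigma>)) =
            Phi y (D \<rho> a) * Phi y (D \<sigma> b) * Phi y ?F"
        unfolding bprod_def Xr_def using rid sid
        by (simp add: Psi_rmul[OF rsp] Psi_conf[OF rsp sy] Psi_delta_one Phi_amul)
      also have "Phi y ?F = (if sfixed \<rho> y then Wt y \<rho> \<sigma> else 0)"
        by (rule Fval[OF rp sp decomp[OF rp] sy])
      finally have e: "Psi (\<rho> \<circ> \<sigma>) y (bprod N dual one D dec \<rho> a \<sigma> b (\<rho> \<circ> \<sigma>)) =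
            Phi y (D \<rho> a) * Phi y (D \<sigma> b) * (if sfixed \<rho> y then Wt y \<rho> \<sigma> else 0)" .
      show ?thesis
      proof (cases "sfixed \<rho> y")
        case True
        have "sfixed \<sigma> y" by (rule sfixed_comp_left[OF sy True])
        then show ?thesis unfolding e using True Phi_D[OF rp sa True] Phi_D[OF sp sb] by simp
      next
        case False then show ?thesis unfolding e by simp
      qed
    qed
  qed
qed

lemma bprod_other:
  "\<tau> \<noteq> \<rho> \<circ> \<sigma> \<Longrightarrow> bprod N dual one D dec \<rho> a \<sigma> b \<tau> = (\<lambda>v. 0)"
  unfolding bprod_def Xr_def by auto


lemma finite_perms: "finite (perms :: ('n \<Rightarrow> 'n) set)"
  by (rule finite_subset[OF subset_UNIV finite_UNIV])

lemma finite_sf: "finite {b :: 'n \<Rightarrow> 'a. sfixed \<pi> b}"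
  by (rule finite_subset[OF subset_UNIV finite_UNIV])

lemma Psi_sum: "finite I \<Longrightarrow> Psi \<pi> y (\<lambda>v. \<Sum>i\<in>I. g i v) = (\<Sum>i\<in>I. Psi \<pi> y (g i))"
  unfolding Psi_def by (simp add: of_int_sum sum_distrib_right) (rule sum.swap)

lemma Psi_scale: "Psi \<pi> y (\<lambda>v. c * f v) = of_int c * Psi \<pi> y f"
  unfolding Psi_def by (simp add: sum_distrib_left mult_ac)

lemma Psi_zero: "Psi \<pi> y (\<lambda>v. 0) = 0"
  unfolding Psi_def by simp

lemma Psi_expand: "(\<Sum>a\<in>{a. sfixed \<pi> a}. of_int (r a) * Psi \<pi> y (delta a)) = Psi \<pi> y r"
proof -
  have "(\<Sum>a\<in>{a. sfixed \<pi> a}. of_int (r a) * Psi \<pi> y (delta a)) =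
        (\<Sum>a\<in>{a. sfixed \<pi> a}. of_int (r a) * (\<Prod>O'\<in>orbs \<pi>. chi (a (orep O')) (y (orep O'))))"
    by (rule sum.cong[OF refl]) (simp add: Psi_delta)
  also have "\<dots> = Psi \<pi> y r" by (simp add: Psi_def)
  finally show ?thesis .
qed

definition H :: "('n \<Rightarrow> 'a) \<Rightarrow> (('n \<Rightarrow> 'n) \<Rightarrow> ('n \<Rightarrow> 'a) \<Rightarrow> int) \<Rightarrow> ('n \<Rightarrow> 'n) \<Rightarrow> complex" where
  "H y u \<tau> = (if sfixed \<tau> y then Psi \<tau> y (u \<tau>) else 0)"

definition conv :: "('n \<Rightarrow> 'a) \<Rightarrow> (('n \<Rightarrow> 'n) \<Rightarrow> complex) \<Rightarrow> (('n \<Rightarrow> 'n) \<Rightarrow> complex) \<Rightarrow> ('n \<Rightarrow> 'n) \<Rightarrow> complex" where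
  "conv y f g \<tau> = (\<Sum>\<rho>\<in>perms. \<Sum>\<sigma>\<in>perms. if \<rho> \<circ> \<sigma> = \<tau> then f \<rho> * g \<sigma> * Wt y \<rho> \<sigma> else 0)"

lemma sum_if_prod:
  "(\<Sum>a\<in>A. \<Sum>b\<in>B. of_int (f a) * of_int (g b) * (if c then P a * Q b * w else 0 :: complex)) =
   (if c then (\<Sum>a\<in>A. of_int (f a) * P a) * (\<Sum>b\<in>B. of_int (g b) * Q b) * w else 0)"
proof (cases c)
  case True
  have "(\<Sum>a\<in>A. of_int (f a) * P a) * (\<Sum>b\<in>B. of_int (g b) * Q b) * w =
        (\<Sum>a\<in>A. \<Sum>b\<in>B. of_int (f a) * P a * (of_int (g b) * Q b) * w)"
    by (subst sum_product, simp only: sum_distrib_right)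
  also have "\<dots> = (\<Sum>a\<in>A. \<Sum>b\<in>B. of_int (f a) * of_int (g b) * (P a * Q b * w))"
    by (intro sum.cong refl) (simp add: mult_ac)
  finally show ?thesis using True by simp
qed simp

lemma H_dmul: "H y (dmul N dual one D dec x1 x2) \<tau> = conv y (H y x1) (H y x2) \<tau>"
proof (cases "sfixed \<tau> y")
  case True
  let ?P = "perms :: ('n \<Rightarrow> 'n) set"
  let ?SF = "\<lambda>\<pi>. {b :: 'n \<Rightarrow> 'a. sfixed \<pi> b}"
  let ?V = "\<lambda>\<rho> a \<sigma> b. Psi \<tau> y (bprod N dual one D dec \<rho> a \<sigma> b \<tau>)"
  have s1: "H y (dmul N dual one D dec x1 x2) \<tau> = (\<Sum>\<rho>\<in>?P. \<Sum>a\<in>?SF \<rho>. \<Sum>\<sigma>\<in>?P. \<Sum>b\<in>?SF \<sigma>.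
              of_int (x1 \<rho> a) * of_int (x2 \<sigma> b) * ?V \<rho> a \<sigma> b)"
    unfolding H_def dmul_def using True
    by (simp add: Psi_sum finite_perms finite_sf Psi_scale)
  have s2: "?V \<rho> a \<sigma> b = (if \<rho> \<circ> \<sigma> = \<tau> then (if sfixed \<rho> y \<and> sfixed \<sigma> y then
              Psi \<rho> y (delta a) * Psi \<sigma> y (delta b) * Wt y \<rho> \<sigma> else 0) else 0)"
    if "\<rho> \<in> ?P" "a \<in> ?SF \<rho>" "\<sigma> \<in> ?P" "b \<in> ?SF \<sigma>" for \<rho> a \<sigma> b
  proof (cases "\<rho> \<circ> \<sigma> = \<tau>")
    case True
    have rp: "\<rho> permutes UNIV" "\<sigma> permutes UNIV" using that unfolding perms_def by auto
    show ?thesis using KB[OF rp _ _, of a b y] that True \<open>sfixed \<tau> y\<close> by auto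
  next
    case False
    then show ?thesis using bprod_other[of \<tau> \<rho> \<sigma> a b] Psi_zero by auto
  qed
  have "H y (dmul N dual one D dec x1 x2) \<tau> = (\<Sum>\<rho>\<in>?P. \<Sum>a\<in>?SF \<rho>. \<Sum>\<sigma>\<in>?P. \<Sum>b\<in>?SF \<sigma>.
              of_int (x1 \<rho> a) * of_int (x2 \<sigma> b) * (if \<rho> \<circ> \<sigma> = \<tau> then (if sfixed \<rho> y \<and> sfixed \<sigma> y then
              Psi \<rho> y (delta a) * Psi \<sigma> y (delta b) * Wt y \<rho> \<sigma> else 0) else 0))"
    unfolding s1 by (intro sum.cong refl) (simp add: s2)
  also have "\<dots> = (\<Sum>\<rho>\<in>?P. \<Sum>\<sigma>\<in>?P. \<Sum>a\<in>?SF \<rho>. \<Sum>b\<in>?SF \<sigma>.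
              of_int (x1 \<rho> a) * of_int (x2 \<sigma> b) * (if \<rho> \<circ> \<sigma> = \<tau> \<and> sfixed \<rho> y \<and> sfixed \<sigma> y then
              Psi \<rho> y (delta a) * Psi \<sigma> y (delta b) * Wt y \<rho> \<sigma> else 0))"
  proof (rule sum.cong[OF refl])
    fix \<rho> assume "\<rho> \<in> ?P"
    show "(\<Sum>a\<in>?SF \<rho>. \<Sum>\<sigma>\<in>?P. \<Sum>b\<in>?SF \<sigma>.
              of_int (x1 \<rho> a) * of_int (x2 \<sigma> b) * (if \<rho> \<circ> \<sigma> = \<tau> then (if sfixed \<rho> y \<and> sfixed \<sigma> y then
              Psi \<rho> y (delta a) * Psi \<sigma> y (delta b) * Wt y \<rho> \<sigma> else 0) else 0)) =
          (\<Sum>\<sigma>\<in>?P. \<Sum>a\<in>?SF \<rho>. \<Sum>b\<in>?SF \<sigma>.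
              of_int (x1 \<rho> a) * of_int (x2 \<sigma> b) * (if \<rho> \<circ> \<sigma> = \<tau> \<and> sfixed \<rho> y \<and> sfixed \<sigma> y then
              Psi \<rho> y (delta a) * Psi \<sigma> y (delta b) * Wt y \<rho> \<sigma> else 0))"
      by (subst sum.swap) (rule sum.cong[OF refl], rule sum.cong[OF refl], rule sum.cong[OF refl], simp)
  qed
  also have "\<dots> = (\<Sum>\<rho>\<in>?P. \<Sum>\<sigma>\<in>?P. (if \<rho> \<circ> \<sigma> = \<tau> \<and> sfixed \<rho> y \<and> sfixed \<sigma> y then
              Psi \<rho> y (x1 \<rho>) * Psi \<sigma> y (x2 \<sigma>) * Wt y \<rho> \<sigma> else 0))"
    by (simp only: sum_if_prod Psi_expand)
  also have "\<dots> = conv y (H y x1) (H y x2) \<tau>"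
    unfolding conv_def H_def by (intro sum.cong refl) auto
  finally show ?thesis .
next
  case False
  have "conv y (H y x1) (H y x2) \<tau> = 0"
    unfolding conv_def
  proof (intro sum.neutral ballI)
    fix \<rho> \<sigma> :: "'n \<Rightarrow> 'n"
    show "(if \<rho> \<circ> \<sigma> = \<tau> then H y x1 \<rho> * H y x2 \<sigma> * Wt y \<rho> \<sigma> else 0) = 0"
    proof (cases "\<rho> \<circ> \<sigma> = \<tau> \<and> sfixed \<rho> y \<and> sfixed \<sigma> y")
      case True
      then have "sfixed \<tau> y" unfolding sfixed_def by auto
      then show ?thesis using False by simp
    next
      case False then show ?thesis unfolding H_def by auto
    qed
  qed
  then show ?thesis unfolding H_def using False by simp
qed


lemma perm_mem: "\<rho> \<in> perms \<longleftrightarrow> \<rho> permutes UNIV"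
  unfolding perms_def by simp

lemma comp_perms: "\<rho> \<in> perms \<Longrightarrow> \<sigma> \<in> perms \<Longrightarrow> \<rho> \<circ> \<sigma> \<in> perms"
  unfolding perms_def using permutes_compose by blast

lemma id_perms: "id \<in> perms"
  unfolding perms_def by (simp add: permutes_id)

lemma cocycle:
  fixes \<rho> \<sigma> \<gamma> :: "'n \<Rightarrow> 'n"
  shows "Wt y \<rho> \<sigma> * Wt y (\<rho> \<circ> \<sigma>) \<gamma> = Wt y \<sigma> \<gamma> * Wt y \<rho> (\<sigma> \<circ> \<gamma>)"
  unfolding Wt_def using G_nz[of y "\<rho> \<circ> \<sigma>"] G_nz[of y "\<sigma> \<circ> \<gamma>"] G_nz[of y id]
    G_nz[of y "\<rho> \<circ> \<sigma> \<circ> \<gamma>"]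
  by (simp add: comp_assoc field_simps)

lemma swap3:
  "finite A \<Longrightarrow> finite B \<Longrightarrow> finite C \<Longrightarrow>
   (\<Sum>a\<in>A. \<Sum>b\<in>B. \<Sum>c\<in>C. F a b c) = (\<Sum>b\<in>B. \<Sum>c\<in>C. \<Sum>a\<in>A. (F a b c :: complex))"
  by (subst sum.swap) (rule sum.cong[OF refl], rule sum.swap)

lemma sum_collapse:
  assumes "finite A" "e \<in> A"
  shows "(\<Sum>x\<in>A. if e = x \<and> Q x then K x else 0) = (if Q e then K e else (0::complex))"
proof -
  have "(\<Sum>x\<in>A. if e = x \<and> Q x then K x else 0) = (\<Sum>x\<in>A. if x = e then (if Q x then K x else 0) else 0)"
    by (rule sum.cong) auto
  then show ?thesis using assms by simp
qed

lemma if_mult_0: "(if P then a else 0) * (c::complex) = (if P then a * c else 0)" by simp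
lemma mult_if_0: "(c::complex) * (if P then a else 0) = (if P then c * a else 0)" by simp

lemma conv_assoc: "conv y (conv y f g) h \<tau> = conv y f (conv y g h) \<tau>"
proof -
  let ?P = "perms :: ('n \<Rightarrow> 'n) set"
  have fP: "finite ?P" by (rule finite_perms)
  have "conv y (conv y f g) h \<tau> = (\<Sum>\<rho>'\<in>?P. \<Sum>\<gamma>\<in>?P. \<Sum>\<rho>\<in>?P. \<Sum>\<sigma>\<in>?P.
      if \<rho> \<circ> \<sigma> = \<rho>' \<and> \<rho>' \<circ> \<gamma> = \<tau> then f \<rho> * g \<sigma> * h \<gamma> * (Wt y \<rho> \<sigma> * Wt y \<rho>' \<gamma>) else 0)"
    unfolding conv_def[of y "conv y f g" h]
  proof (intro sum.cong refl)
    fix \<rho>' \<gamma> :: "'n \<Rightarrow> 'n"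
    show "(if \<rho>' \<circ> \<gamma> = \<tau> then conv y f g \<rho>' * h \<gamma> * Wt y \<rho>' \<gamma> else 0) =
      (\<Sum>\<rho>\<in>?P. \<Sum>\<sigma>\<in>?P.
        if \<rho> \<circ> \<sigma> = \<rho>' \<and> \<rho>' \<circ> \<gamma> = \<tau> then f \<rho> * g \<sigma> * h \<gamma> * (Wt y \<rho> \<sigma> * Wt y \<rho>' \<gamma>) else 0)"
    proof (cases "\<rho>' \<circ> \<gamma> = \<tau>")
      case True
      have "conv y f g \<rho>' * h \<gamma> * Wt y \<rho>' \<gamma> = (\<Sum>\<rho>\<in>?P. \<Sum>\<sigma>\<in>?P.
          (if \<rho> \<circ> \<sigma> = \<rho>' then f \<rho> * g \<sigma> * Wt y \<rho> \<sigma> else 0) * (h \<gamma> * Wt y \<rho>' \<gamma>))"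
        unfolding conv_def mult.assoc[of _ "h \<gamma>"] sum_distrib_right ..
      also have "\<dots> = (\<Sum>\<rho>\<in>?P. \<Sum>\<sigma>\<in>?P.
        if \<rho> \<circ> \<sigma> = \<rho>' \<and> \<rho>' \<circ> \<gamma> = \<tau> then f \<rho> * g \<sigma> * h \<gamma> * (Wt y \<rho> \<sigma> * Wt y \<rho>' \<gamma>) else 0)"
        by (intro sum.cong refl) (simp add: True mult_ac)
      finally show ?thesis using True by simp
    next
      case False then show ?thesis by simp
    qed
  qed
  also have "\<dots> = (\<Sum>\<rho>\<in>?P. \<Sum>\<sigma>\<in>?P. \<Sum>\<gamma>\<in>?P. \<Sum>\<rho>'\<in>?P.
      if \<rho> \<circ> \<sigma> = \<rho>' \<and> \<rho>' \<circ> \<gamma> = \<tau> then f \<rho> * g \<sigma> * h \<gamma> * (Wt y \<rho> \<sigma> * Wt y \<rho>' \<gamma>) else 0)"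
  proof -
    have "(\<Sum>\<rho>'\<in>?P. \<Sum>\<gamma>\<in>?P. \<Sum>\<rho>\<in>?P. \<Sum>\<sigma>\<in>?P.
      if \<rho> \<circ> \<sigma> = \<rho>' \<and> \<rho>' \<circ> \<gamma> = \<tau> then f \<rho> * g \<sigma> * h \<gamma> * (Wt y \<rho> \<sigma> * Wt y \<rho>' \<gamma>) else 0)
      = (\<Sum>\<gamma>\<in>?P. \<Sum>\<rho>\<in>?P. \<Sum>\<rho>'\<in>?P. \<Sum>\<sigma>\<in>?P.
      if \<rho> \<circ> \<sigma> = \<rho>' \<and> \<rho>' \<circ> \<gamma> = \<tau> then f \<rho> * g \<sigma> * h \<gamma> * (Wt y \<rho> \<sigma> * Wt y \<rho>' \<gamma>) else 0)"
      by (rule swap3[OF fP fP fP])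
    also have "\<dots> = (\<Sum>\<gamma>\<in>?P. \<Sum>\<rho>\<in>?P. \<Sum>\<sigma>\<in>?P. \<Sum>\<rho>'\<in>?P.
      if \<rho> \<circ> \<sigma> = \<rho>' \<and> \<rho>' \<circ> \<gamma> = \<tau> then f \<rho> * g \<sigma> * h \<gamma> * (Wt y \<rho> \<sigma> * Wt y \<rho>' \<gamma>) else 0)"
      by (rule sum.cong[OF refl], rule sum.cong[OF refl], rule sum.swap)
    also have "\<dots> = (\<Sum>\<rho>\<in>?P. \<Sum>\<sigma>\<in>?P. \<Sum>\<gamma>\<in>?P. \<Sum>\<rho>'\<in>?P.
      if \<rho> \<circ> \<sigma> = \<rho>' \<and> \<rho>' \<circ> \<gamma> = \<tau> then f \<rho> * g \<sigma> * h \<gamma> * (Wt y \<rho> \<sigma> * Wt y \<rho>' \<gamma>) else 0)"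
      by (rule swap3[OF fP fP fP])
    finally show ?thesis .
  qed
  also have "\<dots> = (\<Sum>\<rho>\<in>?P. \<Sum>\<sigma>\<in>?P. \<Sum>\<gamma>\<in>?P.
      if \<rho> \<circ> \<sigma> \<circ> \<gamma> = \<tau> then f \<rho> * g \<sigma> * h \<gamma> * (Wt y \<rho> \<sigma> * Wt y (\<rho> \<circ> \<sigma>) \<gamma>) else 0)"
    by (intro sum.cong refl) (simp add: sum_collapse[OF fP comp_perms])
  also have "\<dots> = (\<Sum>\<rho>\<in>?P. \<Sum>\<sigma>\<in>?P. \<Sum>\<gamma>\<in>?P.
      if \<rho> \<circ> (\<sigma> \<circ> \<gamma>) = \<tau> then f \<rho> * g \<sigma> * h \<gamma> * (Wt y \<sigma> \<gamma> * Wt y \<rho> (\<sigma> \<circ> \<gamma>)) else 0)"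
    by (intro sum.cong refl) (simp add: cocycle comp_assoc)
  also have "\<dots> = (\<Sum>\<rho>\<in>?P. \<Sum>\<sigma>\<in>?P. \<Sum>\<gamma>\<in>?P. \<Sum>\<sigma>'\<in>?P.
      if \<sigma> \<circ> \<gamma> = \<sigma>' \<and> \<rho> \<circ> \<sigma>' = \<tau> then f \<rho> * g \<sigma> * h \<gamma> * (Wt y \<sigma> \<gamma> * Wt y \<rho> \<sigma>') else 0)"
    by (intro sum.cong refl) (simp add: sum_collapse[OF fP comp_perms])
  also have "\<dots> = (\<Sum>\<rho>\<in>?P. \<Sum>\<sigma>'\<in>?P. \<Sum>\<sigma>\<in>?P. \<Sum>\<gamma>\<in>?P.
      if \<sigma> \<circ> \<gamma> = \<sigma>' \<and> \<rho> \<circ> \<sigma>' = \<tau> then f \<rho> * g \<sigma> * h \<gamma> * (Wt y \<sigma> \<gamma> * Wt y \<rho> \<sigma>') else 0)"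
  proof (rule sum.cong[OF refl])
    fix \<rho>
    show "(\<Sum>\<sigma>\<in>?P. \<Sum>\<gamma>\<in>?P. \<Sum>\<sigma>'\<in>?P.
      if \<sigma> \<circ> \<gamma> = \<sigma>' \<and> \<rho> \<circ> \<sigma>' = \<tau> then f \<rho> * g \<sigma> * h \<gamma> * (Wt y \<sigma> \<gamma> * Wt y \<rho> \<sigma>') else 0) =
      (\<Sum>\<sigma>'\<in>?P. \<Sum>\<sigma>\<in>?P. \<Sum>\<gamma>\<in>?P.
      if \<sigma> \<circ> \<gamma> = \<sigma>' \<and> \<rho> \<circ> \<sigma>' = \<tau> then f \<rho> * g \<sigma> * h \<gamma> * (Wt y \<sigma> \<gamma> * Wt y \<rho> \<sigma>') else 0)"
      using swap3[OF fP fP fP, of "\<lambda>\<sigma>' \<sigma> \<gamma>. if \<sigma> \<circ> \<gamma> = \<sigma>' \<and> \<rho> \<circ> \<sigma>' = \<tau> then f \<rho> * g \<sigma> * h \<gamma> * (Wt y \<sigma> \<gamma> * Wt y \<rho> \<sigma>') else 0"]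
      by simp
  qed
  also have "\<dots> = conv y f (conv y g h) \<tau>"
    unfolding conv_def[of y f "conv y g h"]
  proof (intro sum.cong refl)
    fix \<rho> \<sigma>' :: "'n \<Rightarrow> 'n"
    show "(\<Sum>\<sigma>\<in>?P. \<Sum>\<gamma>\<in>?P.
      if \<sigma> \<circ> \<gamma> = \<sigma>' \<and> \<rho> \<circ> \<sigma>' = \<tau> then f \<rho> * g \<sigma> * h \<gamma> * (Wt y \<sigma> \<gamma> * Wt y \<rho> \<sigma>') else 0) =
      (if \<rho> \<circ> \<sigma>' = \<tau> then f \<rho> * conv y g h \<sigma>' * Wt y \<rho> \<sigma>' else 0)"
    proof (cases "\<rho> \<circ> \<sigma>' = \<tau>")
      case True
      have "f \<rho> * conv y g h \<sigma>' * Wt y \<rho> \<sigma>' = (f \<rho> * Wt y \<rho> \<sigma>') * conv y g h \<sigma>'"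
        by (simp add: mult_ac)
      also have "\<dots> = (\<Sum>\<sigma>\<in>?P. \<Sum>\<gamma>\<in>?P.
          (f \<rho> * Wt y \<rho> \<sigma>') * (if \<sigma> \<circ> \<gamma> = \<sigma>' then g \<sigma> * h \<gamma> * Wt y \<sigma> \<gamma> else 0))"
        unfolding conv_def sum_distrib_left ..
      also have "\<dots> = (\<Sum>\<sigma>\<in>?P. \<Sum>\<gamma>\<in>?P.
        if \<sigma> \<circ> \<gamma> = \<sigma>' \<and> \<rho> \<circ> \<sigma>' = \<tau> then f \<rho> * g \<sigma> * h \<gamma> * (Wt y \<sigma> \<gamma> * Wt y \<rho> \<sigma>') else 0)"
        by (intro sum.cong refl) (simp add: True mult_ac)
      finally show ?thesis using True by simp
    next
      case False then show ?thesis by simp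
    qed
  qed
  finally show ?thesis .
qed

lemma bprod_support:
  assumes "\<rho> \<in> perms" "\<sigma> \<in> perms" "bprod N dual one D dec \<rho> a \<sigma> b \<tau> v \<noteq> 0"
  shows "\<tau> \<in> perms \<and> sfixed \<tau> v"
proof -
  have t: "\<tau> = \<rho> \<circ> \<sigma>" using assms(3) bprod_other by fastforce
  have "sfixed \<tau> v" using assms(3) unfolding bprod_def Xr_def rmul_def
    by (auto simp: sfixed_id split: if_splits)
  then show ?thesis using comp_perms[OF assms(1,2)] t by simp
qed

lemma sum_nz: "sum f A \<noteq> (0::int) \<Longrightarrow> \<exists>a\<in>A. f a \<noteq> 0"
proof (rule ccontr)
  assume "sum f A \<noteq> 0" "\<not> (\<exists>a\<in>A. f a \<noteq> 0)"
  then show False by (simp add: sum.neutral)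
qed

lemma valid_dmul: "valid_elem (dmul N dual one D dec x1 x2)"
  unfolding valid_elem_def
proof (intro allI impI)
  fix \<tau> v assume "dmul N dual one D dec x1 x2 \<tau> v \<noteq> 0"
  then have "(\<Sum>\<rho>\<in>perms. \<Sum>a\<in>{a. sfixed \<rho> a}. \<Sum>\<sigma>\<in>perms. \<Sum>b\<in>{b. sfixed \<sigma> b}.
        x1 \<rho> a * x2 \<sigma> b * bprod N dual one D dec \<rho> a \<sigma> b \<tau> v) \<noteq> 0"
    unfolding dmul_def by simp
  then obtain \<rho> where r: "\<rho> \<in> perms" "(\<Sum>a\<in>{a. sfixed \<rho> a}. \<Sum>\<sigma>\<in>perms. \<Sum>b\<in>{b. sfixed \<sigma> b}.
        x1 \<rho> a * x2 \<sigma> b * bprod N dual one D dec \<rho> a \<sigma> b \<tau> v) \<noteq> 0"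
    using sum_nz by meson
  then obtain a where "(\<Sum>\<sigma>\<in>perms. \<Sum>b\<in>{b. sfixed \<sigma> b}.
        x1 \<rho> a * x2 \<sigma> b * bprod N dual one D dec \<rho> a \<sigma> b \<tau> v) \<noteq> 0"
    using sum_nz by meson
  then obtain \<sigma> where s: "\<sigma> \<in> perms" "(\<Sum>b\<in>{b. sfixed \<sigma> b}.
        x1 \<rho> a * x2 \<sigma> b * bprod N dual one D dec \<rho> a \<sigma> b \<tau> v) \<noteq> 0"
    using sum_nz by meson
  then obtain b where "x1 \<rho> a * x2 \<sigma> b * bprod N dual one D dec \<rho> a \<sigma> b \<tau> v \<noteq> 0"
    using sum_nz by meson
  then have "bprod N dual one D dec \<rho> a \<sigma> b \<tau> v \<noteq> 0" by auto
  then have "\<tau> \<in> perms \<and> sfixed \<tau> v" by (rule bprod_support[OF r(1) s(1)])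
  then show "\<tau> permutes UNIV \<and> sfixed \<tau> v" by (simp add: perm_mem)
qed

lemma H_inj:
  assumes "valid_elem u" "valid_elem u'" "\<And>\<tau> y. \<tau> \<in> perms \<Longrightarrow> H y u \<tau> = H y u' \<tau>"
  shows "u = u'"
proof
  fix \<tau>
  show "u \<tau> = u' \<tau>"
  proof (cases "\<tau> \<in> perms")
    case True
    then have tp: "\<tau> permutes UNIV" by (simp add: perm_mem)
    show ?thesis
    proof (rule Psi_inj[OF tp])
      show "u \<tau> v = 0" if "\<not> sfixed \<tau> v" for v using assms(1) that unfolding valid_elem_def by blast
      show "u' \<tau> v = 0" if "\<not> sfixed \<tau> v" for v using assms(2) that unfolding valid_elem_def by blast
      show "Psi \<tau> y (u \<tau>) = Psi \<tau> y (u' \<tau>)" if "sfixed \<tau> y" for y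
        using assms(3)[OF True, of y] that unfolding H_def by simp
    qed
  next
    case False
    then have "\<not> \<tau> permutes UNIV" by (simp add: perm_mem)
    then have "u \<tau> v = 0" "u' \<tau> v = 0" for v using assms(1,2) unfolding valid_elem_def by blast+
    then show ?thesis by (simp add: fun_eq_iff)
  qed
qed

lemma valid_unit: "valid_elem (Xb id (avec one) :: ('n \<Rightarrow> 'n) \<Rightarrow> ('n \<Rightarrow> 'a) \<Rightarrow> int)"
  unfolding valid_elem_def Xb_def by (auto simp: permutes_id sfixed_id)

lemma H_unit: "H y (Xb id (avec one)) \<tau> = (if \<tau> = id then 1 else 0)"
proof (cases "\<tau> = id")
  case True
  have "Xb id (avec one) \<tau> = delta (avec one)" using True unfolding Xb_def delta_def by (auto simp: fun_eq_iff)
  then show ?thesis using True unfolding H_def by (simp add: sfixed_id Psi_delta_one)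
next
  case False
  have "Xb id (avec one) \<tau> = (\<lambda>v. 0)" using False unfolding Xb_def by (auto simp: fun_eq_iff)
  then show ?thesis using False unfolding H_def by (simp add: Psi_zero)
qed

lemma conv_unit_left: "\<tau> \<in> perms \<Longrightarrow> conv y (H y (Xb id (avec one))) f \<tau> = f \<tau>"
proof -
  assume tP: "\<tau> \<in> perms"
  have "conv y (H y (Xb id (avec one))) f \<tau> =
        (\<Sum>\<rho>\<in>perms. if (\<rho>::'n \<Rightarrow> 'n) = id then (\<Sum>\<sigma>\<in>perms. if \<sigma> = \<tau> then f \<sigma> else 0) else 0)"
    unfolding conv_def H_unit
  proof (rule sum.cong[OF refl])
    fix \<rho> :: "'n \<Rightarrow> 'n"
    show "(\<Sum>\<sigma>\<in>perms. if \<rho> \<circ> \<sigma> = \<tau> then (if \<rho> = id then 1 else 0) * f \<sigma> * Wt y \<rho> \<sigma> else 0) =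
          (if \<rho> = id then (\<Sum>\<sigma>\<in>perms. if \<sigma> = \<tau> then f \<sigma> else 0) else 0)"
      by (cases "\<rho> = id") (simp_all add: Wt_id_left cong: if_cong)
  qed
  also have "\<dots> = f \<tau>" using tP by (simp add: id_perms finite_perms)
  finally show ?thesis .
qed

lemma conv_unit_right: "\<tau> \<in> perms \<Longrightarrow> conv y f (H y (Xb id (avec one))) \<tau> = f \<tau>"
proof -
  assume tP: "\<tau> \<in> perms"
  have "conv y f (H y (Xb id (avec one))) \<tau> =
        (\<Sum>\<rho>\<in>perms. if \<rho> = \<tau> then f \<rho> else 0)"
    unfolding conv_def
  proof (rule sum.cong[OF refl])
    fix \<rho> :: "'n \<Rightarrow> 'n"
    have "(\<Sum>\<sigma>\<in>perms. if \<rho> \<circ> \<sigma> = \<tau> then f \<rho> * H y (Xb id (avec one)) \<sigma> * Wt y \<rho> \<sigma> else 0)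
        = (\<Sum>\<sigma>\<in>perms. if (\<sigma>::'n \<Rightarrow> 'n) = id then (if \<rho> = \<tau> then f \<rho> else 0) else 0)"
      unfolding H_unit
    proof (rule sum.cong[OF refl])
      fix \<sigma> :: "'n \<Rightarrow> 'n"
      show "(if \<rho> \<circ> \<sigma> = \<tau> then f \<rho> * (if \<sigma> = id then 1 else 0) * Wt y \<rho> \<sigma> else 0) =
            (if \<sigma> = id then (if \<rho> = \<tau> then f \<rho> else 0) else 0)"
        by (cases "\<sigma> = id") (auto simp: Wt_id_right cong: if_cong)
    qed
    also have "\<dots> = (if \<rho> = \<tau> then f \<rho> else 0)" by (simp add: id_perms finite_perms)
    finally show "(\<Sum>\<sigma>\<in>perms. if \<rho> \<circ> \<sigma> = \<tau> then f \<rho> * H y (Xb id (avec one)) \<sigma> * Wt y \<rho> \<sigma> else 0)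
        = (if \<rho> = \<tau> then f \<rho> else 0)" .
  qed
  also have "\<dots> = f \<tau>" using tP finite_perms by simp
  finally show ?thesis .
qed

lemma main:
  assumes "valid_elem x" "valid_elem x'" "valid_elem z"
  shows "dmul N dual one D dec (dmul N dual one D dec x x') z
           = dmul N dual one D dec x (dmul N dual one D dec x' z)
       \<and> dmul N dual one D dec (Xb id (avec one)) x = x
       \<and> dmul N dual one D dec x (Xb id (avec one)) = x"
proof (intro conjI)
  have Hd: "H y (dmul N dual one D dec u u') = conv y (H y u) (H y u')" for y u u'
    by (rule ext) (rule H_dmul)
  show "dmul N dual one D dec (dmul N dual one D dec x x') z = dmul N dual one D dec x (dmul N dual one D dec x' z)"
    by (rule H_inj[OF valid_dmul valid_dmul]) (simp only: Hd conv_assoc)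
  show "dmul N dual one D dec (Xb id (avec one)) x = x"
    by (rule H_inj[OF valid_dmul assms(1)]) (simp only: Hd conv_unit_left)
  show "dmul N dual one D dec x (Xb id (avec one)) = x"
    by (rule H_inj[OF valid_dmul assms(1)]) (simp only: Hd conv_unit_right)
qed

end


theorem lemma4p16:
  fixes N :: "'a::finite \<Rightarrow> 'a \<Rightarrow> 'a \<Rightarrow> nat" and one :: 'a and dual :: "'a \<Rightarrow> 'a"
    and D :: "('n::finite \<Rightarrow> 'n) \<Rightarrow> ('n \<Rightarrow> 'a) \<Rightarrow> ('n \<Rightarrow> 'a) \<Rightarrow> int"
    and dec :: "('n \<Rightarrow> 'n) \<Rightarrow> 'n list list"
    and x y z :: "('n \<Rightarrow> 'n) \<Rightarrow> ('n \<Rightarrow> 'a) \<Rightarrow> int"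
  assumes "card (UNIV :: 'n set) \<ge> 2"
    and "mtc_fusion_rules N one dual"
    and "is_deconf N one D"
    and "\<forall>\<rho>. \<rho> permutes UNIV \<longrightarrow> is_cycle_decomp \<rho> (dec \<rho>)"
    and "valid_elem x" and "valid_elem y" and "valid_elem z"
  shows "dmul N dual one D dec (dmul N dual one D dec x y) z
           = dmul N dual one D dec x (dmul N dual one D dec y z)
       \<and> dmul N dual one D dec (Xb id (avec one)) x = x
       \<and> dmul N dual one D dec x (Xb id (avec one)) = x"
proof -
  have "\<exists>S :: 'a \<Rightarrow> 'a \<Rightarrow> complex.
        (\<forall>a b. S a b = S b a) \<and>
        (\<forall>a b. (\<Sum>x\<in>UNIV. S a x * cnj (S b x)) = (if a = b then 1 else 0)) \<and>
        (\<forall>a b. S (dual a) b = cnj (S a b)) \<and>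
        (\<forall>x. S one x \<noteq> 0) \<and>
        (\<forall>a b c. of_nat (N a b c) = (\<Sum>x\<in>UNIV. S a x * S b x * cnj (S c x) / S one x))"
    using assms(2) unfolding mtc_fusion_rules_def by (elim conjE) assumption
  then obtain S :: "'a \<Rightarrow> 'a \<Rightarrow> complex" where S0:
        "(\<forall>a b. S a b = S b a) \<and>
        (\<forall>a b. (\<Sum>x\<in>UNIV. S a x * cnj (S b x)) = (if a = b then 1 else 0)) \<and>
        (\<forall>a b. S (dual a) b = cnj (S a b)) \<and>
        (\<forall>x. S one x \<noteq> 0) \<and>
        (\<forall>a b c. of_nat (N a b c) = (\<Sum>x\<in>UNIV. S a x * S b x * cnj (S c x) / S one x))" ..
  note S = conjunct1[OF S0] conjunct1[OF conjunct2[OF S0]] conjunct1[OF conjunct2[OF conjunct2[OF S0]]]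
    conjunct1[OF conjunct2[OF conjunct2[OF conjunct2[OF S0]]]] conjunct2[OF conjunct2[OF conjunct2[OF conjunct2[OF S0]]]]
  have M1: "\<forall>a. dual (dual a) = a" using assms(2) unfolding mtc_fusion_rules_def by (rule conjunct1)
  have M2: "dual one = one" using assms(2) unfolding mtc_fusion_rules_def by (rule conjunct1[OF conjunct2])
  have M3: "\<forall>a b. N one a b = (if a = b then 1 else 0)"
    using assms(2) unfolding mtc_fusion_rules_def by (rule conjunct1[OF conjunct2[OF conjunct2]])
  note M = M1 M2 M3
  interpret rsetup N one dual S D dec
  proof (unfold_locales)
    show "\<And>a. dual (dual a) = a" using M(1) by simp
    show "dual one = one" by (rule M(2))
    show "\<And>a b. N one a b = (if a = b then 1 else 0)" using M(3) by simp
    show "\<And>a b. S a b = S b a" using S(1) by simp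
    show "\<And>a b. (\<Sum>x\<in>UNIV. S a x * cnj (S b x)) = (if a = b then 1 else 0)" using S(2) by simp
    show "\<And>a b. S (dual a) b = cnj (S a b)" using S(3) by simp
    show "\<And>x. S one x \<noteq> 0" using S(4) by simp
    show "\<And>a b c. of_nat (N a b c) = (\<Sum>x\<in>UNIV. S a x * S b x * cnj (S c x) / S one x)" using S(5) by simp
    show "is_deconf N one D" by (rule assms(3))
    show "\<And>\<rho>. \<rho> permutes UNIV \<Longrightarrow> is_cycle_decomp \<rho> (dec \<rho>)" using assms(4) by simp
  qed
  show ?thesis by (rule main[OF assms(5-7)])
qed

end
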